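(* Let $f:\mathbb N\to(0,\infty)$ satisfy $f(n)\to\infty$. There exists a critical offspring distribution $\mu$ such that \[ \limsup_{n\to\infty}\mathbf P\big(\mathsf{Height}(\mathrm T_n)<f(n)\ln n\big)=1\qquad\text{and}\qquad\limsup_{n\to\infty}\mathbf P\big(\mathsf{Width}(\mathrm T_n)>n/f(n)\big)=1, \] where the limits superior are taken along integers $n$ with $\mathbf P(|\mathrm T|=n)>0$.
   Context: An offspring distribution is a probability measure $\mu=(\mu_k)_{k\ge 0}$ on $\mathbb Z_+$; it is critical if $\sum_k k\mu_k=1$. A $\mu$-Bienaymé tree $\mathrm T=\mathrm T(\mu)$ is the family tree of a Galton–Watson process with offspring distribution $\mu$ started from one individual; $\mathrm T_n$ is $\mathrm T$ conditioned on having exactly $n$ vertices (defined when $\mathbf P(|\mathrm T|=n)>0$). $\mathsf{Height}$ is the maximal distance of a vertex from the root and $\mathsf{Width}$ is the maximal number of vertices at a common distance from the root. *)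

theory Defs
  imports "HOL-Analysis.Analysis"
begin

text \<open>Finite rooted plane (ordered) trees: a vertex is given by the list of its children.\<close>
datatype ptree = Node "ptree list"

fun tsize :: "ptree \<Rightarrow> nat" where
  "tsize (Node ts) = 1 + sum_list (map tsize ts)"

fun theight :: "ptree \<Rightarrow> nat" where
  "theight (Node ts) = (if ts = [] then 0 else 1 + Max (set (map theight ts)))"

fun levelcount :: "ptree \<Rightarrow> nat \<Rightarrow> nat" where
  "levelcount (Node ts) 0 = 1"
| "levelcount (Node ts) (Suc k) = sum_list (map (\<lambda>s. levelcount s k) ts)"

definition twidth :: "ptree \<Rightarrow> nat" where
  "twidth t = Max (levelcount t ` {..theight t})"

definition offspring_distr :: "(nat \<Rightarrow> real) \<Rightarrow> bool" where
  "offspring_distr \<mu> \<longleftrightarrow> (\<forall>k. 0 \<le> \<mu> k) \<and> \<mu> sums 1"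

definition critical :: "(nat \<Rightarrow> real) \<Rightarrow> bool" where
  "critical \<mu> \<longleftrightarrow> offspring_distr \<mu> \<and> (\<lambda>k. real k * \<mu> k) sums 1"

text \<open>Probability that the \<mu>-Bienaym\'e tree equals the finite plane tree t.\<close>
fun bw_weight :: "(nat \<Rightarrow> real) \<Rightarrow> ptree \<Rightarrow> real" where
  "bw_weight \<mu> (Node ts) = \<mu> (length ts) * prod_list (map (bw_weight \<mu>) ts)"

definition size_prob :: "(nat \<Rightarrow> real) \<Rightarrow> nat \<Rightarrow> real" where
  "size_prob \<mu> n = (\<Sum>t\<in>{t. tsize t = n}. bw_weight \<mu> t)"

text \<open>P(T_n satisfies P) = P(|T| = n and T satisfies P) / P(|T| = n).\<close>
definition cond_prob :: "(nat \<Rightarrow> real) \<Rightarrow> nat \<Rightarrow> (ptree \<Rightarrow> bool) \<Rightarrow> real" where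
  "cond_prob \<mu> n P = (\<Sum>t\<in>{t. tsize t = n \<and> P t}. bw_weight \<mu> t) / size_prob \<mu> n"

definition admissible_seq :: "(nat \<Rightarrow> real) \<Rightarrow> nat filter" where
  "admissible_seq \<mu> = inf sequentially (principal {n. size_prob \<mu> n > 0})"

end

theory Submission
  imports Defs
begin


fun maxdeg :: "ptree \<Rightarrow> nat" where
  "maxdeg (Node ts) = Max (insert (length ts) (set (map maxdeg ts)))"

lemma tsize_ge1: "tsize t \<ge> 1" by (cases t) auto

lemma child_size_le: "c \<in> set ts \<Longrightarrow> tsize c \<le> sum_list (map tsize ts)"
  by (simp add: member_le_sum_list)

lemma theight_lt_tsize: "theight t < tsize t"
proof (induction t)
  case (Node ts)
  show ?case
  proof (cases "ts = []")
    case True then show ?thesis by simp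
  next
    case False
    have "Max (set (map theight ts)) \<in> set (map theight ts)" using False by (intro Max_in) auto
    then obtain c where c: "c \<in> set ts" "Max (set (map theight ts)) = theight c" by auto
    have "theight c < tsize c" using Node c by auto
    with child_size_le[OF c(1)] c show ?thesis using False by simp
  qed
qed

lemma maxdeg_lt_tsize: "maxdeg t < tsize t"
proof (induction t)
  case (Node ts)
  have "length ts \<le> sum_list (map tsize ts)"
  proof -
    have "sum_list (map (\<lambda>_. 1::nat) ts) \<le> sum_list (map tsize ts)"
      by (rule sum_list_mono) (use tsize_ge1 in auto)
    then show ?thesis by (simp add: sum_list_triv)
  qed
  moreover have "\<forall>c\<in>set ts. maxdeg c < 1 + sum_list (map tsize ts)"
    using Node child_size_le by fastforce
  ultimately show ?case by auto
qed

lemma levelcount_0[simp]: "levelcount t 0 = 1" by (cases t) auto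

lemma levelcount_le_twidth: "k \<le> theight t \<Longrightarrow> levelcount t k \<le> twidth t"
  unfolding twidth_def by (intro Max_ge) auto

lemma exists_level_maxdeg: "\<exists>k\<le>theight t. maxdeg t \<le> levelcount t k"
proof (induction t)
  case (Node ts)
  have "Max (insert (length ts) (set (map maxdeg ts))) \<in> insert (length ts) (set (map maxdeg ts))"
    by (intro Max_in) auto
  then consider "maxdeg (Node ts) = length ts" | c where "c \<in> set ts" "maxdeg (Node ts) = maxdeg c"
    by auto
  then show ?case
  proof cases
    case 1
    show ?thesis
    proof (cases "ts = []")
      case True then show ?thesis using 1 by (intro exI[of _ 0]) auto
    next
      case False
      have "levelcount (Node ts) 1 = sum_list (map (\<lambda>s. levelcount s 0) ts)" by simp
      also have "map (\<lambda>s. levelcount s 0) ts = map (\<lambda>_. 1) ts"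
        by simp
      finally have "levelcount (Node ts) 1 = length ts" by (simp add: sum_list_triv)
      moreover have "1 \<le> theight (Node ts)" using False by simp
      ultimately show ?thesis using 1 by (intro exI[of _ 1]) auto
    qed
  next
    case 2
    from Node[OF 2(1)] obtain k where k: "k \<le> theight c" "maxdeg c \<le> levelcount c k" by auto
    have "levelcount c k \<le> levelcount (Node ts) (Suc k)"
      using 2(1) by (simp add: member_le_sum_list)
    moreover have "k \<le> Max (theight ` set ts)" using k(1) 2(1) by (meson Max_ge finite_imageI finite_set imageI le_trans)
    hence "Suc k \<le> theight (Node ts)" using 2(1) by auto
    ultimately show ?thesis using k 2 by (intro exI[of _ "Suc k"]) auto
  qed
qed

lemma maxdeg_le_twidth: "maxdeg t \<le> twidth t"
  using exists_level_maxdeg levelcount_le_twidth le_trans by blast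




definition lst :: "nat \<Rightarrow> 'a set \<Rightarrow> 'a list set" where
  "lst d A = {xs. length xs = d \<and> set xs \<subseteq> A}"

lemma lst_0[simp]: "lst 0 A = {[]}" by (auto simp: lst_def)

lemma lst_Suc: "lst (Suc d) A = (\<lambda>(x,xs). x#xs) ` (A \<times> lst d A)"
  unfolding lst_def by (auto simp: length_Suc_conv)

lemma finite_lst: "finite A \<Longrightarrow> finite (lst d A)"
  by (induction d) (auto simp: lst_Suc)

lemma sum_lst_Suc:
  assumes "finite A"
  shows "(\<Sum>xs\<in>lst (Suc d) A. g xs) = (\<Sum>x\<in>A. \<Sum>xs\<in>lst d A. g (x#xs))"
proof -
  have "inj_on (\<lambda>(x,xs). x#xs) (A \<times> lst d A)" by (auto simp: inj_on_def)
  then have "(\<Sum>xs\<in>lst (Suc d) A. g xs) = (\<Sum>p\<in>A \<times> lst d A. g (fst p # snd p))"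
    unfolding lst_Suc by (subst sum.reindex) (auto simp: case_prod_beta)
  also have "\<dots> = (\<Sum>x\<in>A. \<Sum>xs\<in>lst d A. g (x#xs))"
    by (simp add: sum.cartesian_product split_def)
  finally show ?thesis .
qed

lemma L0:
  assumes "finite A"
  shows "(\<Sum>xs\<in>lst d A. prod_list (map w xs)) = (sum w A :: real) ^ d"
proof (induction d)
  case 0 then show ?case by simp
next
  case (Suc d)
  show ?case using assms
    by (simp add: sum_lst_Suc Suc sum_distrib_left[symmetric] sum_distrib_right[symmetric])
qed

lemma prod_list_nonneg: "(\<And>x. x \<in> set xs \<Longrightarrow> 0 \<le> w x) \<Longrightarrow> 0 \<le> prod_list (map w xs :: real list)"
  by (induction xs) auto

lemma prod_list_le1: "(\<And>x. x \<in> set xs \<Longrightarrow> 0 \<le> w x \<and> w x \<le> 1) \<Longrightarrow> prod_list (map w xs :: real list) \<le> 1"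
  by (induction xs) (auto intro: mult_le_one prod_list_nonneg)

lemma sum_list_nonneg': "(\<And>x. x \<in> set xs \<Longrightarrow> 0 \<le> w x) \<Longrightarrow> 0 \<le> sum_list (map w xs :: real list)"
  by (induction xs) auto

lemma L1:
  fixes w \<phi> :: "'a \<Rightarrow> real"
  assumes "finite A" "\<And>x. x \<in> A \<Longrightarrow> 0 \<le> w x" "\<And>x. x \<in> A \<Longrightarrow> 0 \<le> \<phi> x" "sum w A \<le> 1"
  shows "(\<Sum>xs\<in>lst d A. prod_list (map w xs) * sum_list (map \<phi> xs)) \<le> d * (\<Sum>x\<in>A. w x * \<phi> x)"
proof (induction d)
  case 0 then show ?case by simp
next
  case (Suc d)
  let ?E = "\<Sum>x\<in>A. w x * \<phi> x"
  let ?a = "sum w A"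
  have a0: "0 \<le> ?a" using assms by (intro sum_nonneg) auto
  have "(\<Sum>xs\<in>lst (Suc d) A. prod_list (map w xs) * sum_list (map \<phi> xs))
      = (\<Sum>x\<in>A. \<Sum>xs\<in>lst d A. (w x * \<phi> x) * prod_list (map w xs) + w x * (prod_list (map w xs) * sum_list (map \<phi> xs)))"
    using assms(1) by (simp add: sum_lst_Suc algebra_simps)
  also have "\<dots> = ?E * ?a ^ d + ?a * (\<Sum>xs\<in>lst d A. prod_list (map w xs) * sum_list (map \<phi> xs))"
    using assms(1) by (simp add: sum.distrib sum_distrib_left[symmetric] sum_distrib_right[symmetric] L0)
  also have "\<dots> \<le> ?E * 1 + 1 * (d * ?E)"
  proof (intro add_mono mult_mono)
    show "?a ^ d \<le> 1" using a0 assms(4) by (intro power_le_one)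
    show "0 \<le> ?E" using assms by (intro sum_nonneg) auto
    show "0 \<le> (\<Sum>xs\<in>lst d A. prod_list (map w xs) * sum_list (map \<phi> xs))"
      using assms unfolding lst_def
      by (intro sum_nonneg mult_nonneg_nonneg prod_list_nonneg sum_list_nonneg') auto
  qed (use Suc a0 assms(4) in auto)
  finally show ?case by (simp add: algebra_simps)
qed

lemma L2:
  fixes w \<phi> :: "'a \<Rightarrow> real"
  assumes "finite A" "\<And>x. x \<in> A \<Longrightarrow> 0 \<le> w x" "\<And>x. x \<in> A \<Longrightarrow> 0 \<le> \<phi> x" "sum w A \<le> 1"
  shows "(\<Sum>xs\<in>lst d A. prod_list (map w xs) * (sum_list (map \<phi> xs))^2)
     \<le> d * (\<Sum>x\<in>A. w x * (\<phi> x)^2) + d * (d - 1) * (\<Sum>x\<in>A. w x * \<phi> x)^2"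
proof (induction d)
  case 0 then show ?case by simp
next
  case (Suc d)
  let ?E = "\<Sum>x\<in>A. w x * \<phi> x"
  let ?Q = "\<Sum>x\<in>A. w x * (\<phi> x)^2"
  let ?a = "sum w A"
  let ?S1 = "\<Sum>xs\<in>lst d A. prod_list (map w xs) * sum_list (map \<phi> xs)"
  let ?S2 = "\<Sum>xs\<in>lst d A. prod_list (map w xs) * (sum_list (map \<phi> xs))^2"
  have a0: "0 \<le> ?a" using assms by (intro sum_nonneg) auto
  have E0: "0 \<le> ?E" using assms by (intro sum_nonneg) auto
  have "(\<Sum>xs\<in>lst (Suc d) A. prod_list (map w xs) * (sum_list (map \<phi> xs))^2)
      = (\<Sum>x\<in>A. \<Sum>xs\<in>lst d A. (w x * (\<phi> x)^2) * prod_list (map w xs)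
            + 2 * (w x * \<phi> x) * (prod_list (map w xs) * sum_list (map \<phi> xs))
            + w x * (prod_list (map w xs) * (sum_list (map \<phi> xs))^2))"
    using assms(1) by (simp add: sum_lst_Suc algebra_simps power2_eq_square)
  also have "\<dots> = (\<Sum>x\<in>A. (w x * (\<phi> x)^2) * (\<Sum>xs\<in>lst d A. prod_list (map w xs)))
        + (\<Sum>x\<in>A. (2 * (w x * \<phi> x)) * ?S1) + (\<Sum>x\<in>A. w x * ?S2)"
    by (simp add: sum.distrib sum_distrib_left)
  also have "\<dots> = ?Q * ?a ^ d + 2 * ?E * ?S1 + ?a * ?S2"
  proof -
    have 1: "(\<Sum>x\<in>A. (w x * (\<phi> x)^2) * (\<Sum>xs\<in>lst d A. prod_list (map w xs))) = ?Q * ?a ^ d"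
      using assms(1) by (simp only: L0 sum_distrib_right[symmetric])
    have 2: "(\<Sum>x\<in>A. (2 * (w x * \<phi> x)) * ?S1) = 2 * ?E * ?S1"
      by (simp only: sum_distrib_right[symmetric] sum_distrib_left[symmetric])
    have 3: "(\<Sum>x\<in>A. w x * ?S2) = ?a * ?S2"
      by (simp only: sum_distrib_right[symmetric])
    show ?thesis using 1 2 3 by simp
  qed
  also have "\<dots> \<le> ?Q * 1 + 2 * ?E * (d * ?E) + 1 * (real d * ?Q + real d * (real d - 1) * ?E^2)"
  proof (intro add_mono mult_mono mult_left_mono)
    show "?a ^ d \<le> 1" using a0 assms(4) by (intro power_le_one)
    show "0 \<le> ?Q" using assms by (intro sum_nonneg) auto
    show "?S1 \<le> d * ?E" using L1[OF assms] .
    show "0 \<le> ?S2"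
      using assms unfolding lst_def
      by (intro sum_nonneg mult_nonneg_nonneg prod_list_nonneg) auto
    show "0 \<le> ?S1"
      using assms unfolding lst_def
      by (intro sum_nonneg mult_nonneg_nonneg prod_list_nonneg sum_list_nonneg') auto
  qed (use Suc a0 E0 assms(4) in auto)
  also have "\<dots> = real (Suc d) * ?Q + real (Suc d) * (real (Suc d) - 1) * ?E^2"
    by (simp add: algebra_simps power2_eq_square)
  finally show ?case .
qed




definition Tset :: "nat \<Rightarrow> nat \<Rightarrow> ptree set" where
  "Tset D h = {t. maxdeg t < D \<and> theight t \<le> h}"

lemma Tset_0: "0 < D \<Longrightarrow> Tset D 0 = {Node []}"
proof -
  assume D: "0 < D"
  have "theight t \<le> 0 \<Longrightarrow> t = Node []" for t
    by (cases t) (auto split: if_splits)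
  then show ?thesis using D by (auto simp: Tset_def)
qed

lemma theight_Node_le: "theight (Node ts) \<le> Suc h \<longleftrightarrow> (\<forall>c\<in>set ts. theight c \<le> h)"
proof (cases "ts = []")
  case False
  have "Max (theight ` set ts) \<le> h \<longleftrightarrow> (\<forall>c\<in>set ts. theight c \<le> h)"
    using False by (subst Max_le_iff) auto
  then show ?thesis using False by simp
qed simp

lemma Tset_Suc: "Tset D (Suc h) = Node ` {ts. length ts < D \<and> set ts \<subseteq> Tset D h}"
proof -
  have "t \<in> Tset D (Suc h) \<longleftrightarrow> t \<in> Node ` {ts. length ts < D \<and> set ts \<subseteq> Tset D h}" for t
  proof (cases t)
    case (Node ts)
    have "maxdeg (Node ts) < D \<longleftrightarrow> length ts < D \<and> (\<forall>c\<in>set ts. maxdeg c < D)"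
      by (simp add: Max_less_iff)
    then show ?thesis using Node theight_Node_le[of ts h] by (auto simp: Tset_def)
  qed
  then show ?thesis by blast
qed

lemma finite_Tset: "finite (Tset D h)"
proof (induction h)
  case 0
  have "Tset D 0 \<subseteq> {Node []}"
    using Tset_0[of D] by (cases "D = 0") (auto simp: Tset_def)
  then show ?case using finite_subset by blast
next
  case (Suc h)
  have "{ts. length ts < D \<and> set ts \<subseteq> Tset D h} \<subseteq> {ts. set ts \<subseteq> Tset D h \<and> length ts \<le> D}" by auto
  then have "finite {ts. length ts < D \<and> set ts \<subseteq> Tset D h}"
    using finite_lists_length_le[OF Suc] finite_subset by blast
  then show ?case by (simp add: Tset_Suc)
qed

lemma sum_Tset_Suc:
  "(\<Sum>t\<in>Tset D (Suc h). g t) = (\<Sum>d<D. \<Sum>ts\<in>lst d (Tset D h). g (Node ts))"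
proof -
  let ?X = "{ts. length ts < D \<and> set ts \<subseteq> Tset D h}"
  have fX: "finite ?X"
  proof -
    have "?X \<subseteq> {ts. set ts \<subseteq> Tset D h \<and> length ts \<le> D}" by auto
    then show ?thesis using finite_lists_length_le[OF finite_Tset] finite_subset by blast
  qed
  have "(\<Sum>t\<in>Tset D (Suc h). g t) = (\<Sum>ts\<in>?X. g (Node ts))"
    unfolding Tset_Suc by (subst sum.reindex) (auto simp: inj_on_def)
  also have "\<dots> = (\<Sum>d<D. \<Sum>ts\<in>{ts. ts \<in> ?X \<and> length ts = d}. g (Node ts))"
    by (rule sum.group[symmetric]) (use fX in auto)
  also have "\<dots> = (\<Sum>d<D. \<Sum>ts\<in>lst d (Tset D h). g (Node ts))"
    by (intro sum.cong refl) (auto simp: lst_def)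
  finally show ?thesis .
qed

lemma bw_nonneg: "(\<And>k. 0 \<le> \<mu> k) \<Longrightarrow> 0 \<le> bw_weight \<mu> t"
proof (induction t)
  case (Node ts)
  then show ?case by (auto intro!: mult_nonneg_nonneg prod_list_nonneg)
qed

lemma real_tsize_Node: "real (tsize (Node ts)) = 1 + sum_list (map (\<lambda>t. real (tsize t)) ts)"
  by (simp add: sum_list_of_nat[symmetric] o_def)

lemma one_minus_pow_le: "0 \<le> (a::real) \<Longrightarrow> a \<le> 1 \<Longrightarrow> 1 - a ^ d \<le> d * (1 - a)"
proof -
  assume a: "0 \<le> a" "a \<le> 1"
  have "(\<Sum>i<d. a^i) \<le> (\<Sum>i<d. 1)" by (intro sum_mono power_le_one) (use a in auto)
  then have "(1 - a) * (\<Sum>i<d. a^i) \<le> (1 - a) * d" using a by (intro mult_left_mono) auto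
  then show ?thesis by (simp add: one_diff_power_eq algebra_simps)
qed

locale mom =
  fixes \<mu> :: "nat \<Rightarrow> real" and D :: nat
  assumes nonneg: "\<And>k. 0 \<le> \<mu> k" and Dpos: "0 < D" and mass: "(\<Sum>d<D. \<mu> d) \<le> 1"
begin

abbreviation "bw \<equiv> bw_weight \<mu>"
definition "a h = (\<Sum>t\<in>Tset D h. bw t)"
definition "m = (\<Sum>d<D. real d * \<mu> d)"
definition "V = (\<Sum>d<D. real d * (real d - 1) * \<mu> d)"
definition "\<tau> = 1 - (\<Sum>d<D. \<mu> d)"

lemma bw0: "0 \<le> bw t" using bw_nonneg nonneg by blast

lemma m_nonneg: "0 \<le> m" unfolding m_def using nonneg by (intro sum_nonneg) auto

lemma a_0: "a 0 = \<mu> 0" unfolding a_def using Dpos by (simp add: Tset_0)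


lemma mom_Suc:
  "(\<Sum>t\<in>Tset D (Suc h). bw t * g t)
     = (\<Sum>d<D. \<mu> d * (\<Sum>ts\<in>lst d (Tset D h). prod_list (map bw ts) * g (Node ts)))"
  unfolding sum_Tset_Suc sum_distrib_left
  by (intro sum.cong refl) (auto simp: lst_def mult.assoc)

lemma a_Suc: "a (Suc h) = (\<Sum>d<D. \<mu> d * a h ^ d)"
  using mom_Suc[where h=h and g="\<lambda>_. 1"] unfolding a_def
  by (simp add: L0 finite_Tset)

lemma a_bounds: "0 \<le> a h \<and> a h \<le> 1"
proof (induction h)
  case 0
  have "\<mu> 0 \<le> (\<Sum>d<D. \<mu> d)" using Dpos nonneg by (intro member_le_sum) auto
  then show ?case using a_0 nonneg mass by auto
next
  case (Suc h)
  have "(\<Sum>d<D. \<mu> d * a h ^ d) \<le> (\<Sum>d<D. \<mu> d)"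
    using Suc nonneg by (intro sum_mono mult_right_le_one_le power_le_one) auto
  moreover have "0 \<le> (\<Sum>d<D. \<mu> d * a h ^ d)"
    using Suc nonneg by (intro sum_nonneg mult_nonneg_nonneg) auto
  ultimately show ?case using mass a_Suc by auto
qed

lemma sum_subset_le_a: "S \<subseteq> Tset D h \<Longrightarrow> (\<Sum>t\<in>S. bw t) \<le> a h"
  unfolding a_def by (intro sum_mono2 finite_Tset) (auto simp: bw0)

definition "E h = (\<Sum>t\<in>Tset D h. bw t * real (tsize t))"

lemma E_bound: assumes "m < 1" shows "E h \<le> 1 / (1 - m)"
proof (induction h)
  case 0
  have "E 0 = \<mu> 0" unfolding E_def using Dpos by (simp add: Tset_0)
  also have "\<mu> 0 \<le> 1" using a_bounds[of 0] a_0 by simp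
  also have "1 \<le> 1 / (1 - m)" using assms m_nonneg by (simp add: field_simps)
  finally show ?case .
next
  case (Suc h)
  have "E (Suc h) = (\<Sum>d<D. \<mu> d * (\<Sum>ts\<in>lst d (Tset D h).
        prod_list (map bw ts) + prod_list (map bw ts) * sum_list (map (\<lambda>t. real (tsize t)) ts)))"
    unfolding E_def mom_Suc real_tsize_Node by (simp add: algebra_simps)
  also have "\<dots> = (\<Sum>d<D. \<mu> d * (a h ^ d + (\<Sum>ts\<in>lst d (Tset D h).
        prod_list (map bw ts) * sum_list (map (\<lambda>t. real (tsize t)) ts))))"
    by (simp add: sum.distrib L0 finite_Tset a_def)
  also have "\<dots> \<le> (\<Sum>d<D. \<mu> d * (1 + d * E h))"
  proof (intro sum_mono mult_left_mono add_mono)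
    fix d assume "d \<in> {..<D}"
    show "a h ^ d \<le> 1" using a_bounds[of h] by (intro power_le_one) auto
    show "(\<Sum>ts\<in>lst d (Tset D h). prod_list (map bw ts) * sum_list (map (\<lambda>t. real (tsize t)) ts)) \<le> d * E h"
      unfolding E_def using a_bounds[of h] unfolding a_def
      by (intro L1 finite_Tset) (auto simp: bw0)
  qed (auto simp: nonneg)
  also have "\<dots> = (\<Sum>d<D. \<mu> d) + (\<Sum>d<D. real d * \<mu> d * E h)"
    by (simp add: sum.distrib algebra_simps)
  also have "\<dots> = (\<Sum>d<D. \<mu> d) + m * E h"
    by (simp add: m_def sum_distrib_right)
  also have "\<dots> \<le> 1 + m * (1 / (1 - m))"
    using mass Suc m_nonneg by (intro add_mono mult_left_mono) auto
  also have "\<dots> = 1 / (1 - m)" using assms by (simp add: field_simps)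
  finally show ?case .
qed

end




lemma geo_aux: "(m::real) < 1 \<Longrightarrow> X + m * (X / (1 - m)) = X / (1 - m)"
  by (simp add: field_simps)

context mom begin

lemma E_nonneg: "0 \<le> E h" unfolding E_def by (intro sum_nonneg mult_nonneg_nonneg) (auto simp: bw0)

definition "Q h = (\<Sum>t\<in>Tset D h. bw t * (real (tsize t))^2)"

lemma dd_nonneg: "0 \<le> real d * (real d - 1)"
  by (cases d) auto

lemma Q_bound:
  assumes "m < 1"
  shows "Q h \<le> (1 + 2 * m * (1/(1-m)) + V * (1/(1-m))^2) / (1 - m)"
proof (induction h)
  let ?Es = "1/(1-m)"
  let ?Qs = "(1 + 2 * m * ?Es + V * ?Es^2) / (1 - m)"
  have V0: "0 \<le> V" unfolding V_def by (intro sum_nonneg mult_nonneg_nonneg[OF dd_nonneg nonneg])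
  have Es0: "0 \<le> ?Es" using assms by auto
  {
    case 0
    have "Q 0 = \<mu> 0" unfolding Q_def using Dpos by (simp add: Tset_0)
    also have "\<mu> 0 \<le> 1" using a_bounds[of 0] a_0 by simp
    also have "1 \<le> ?Qs"
    proof -
      have "1 \<le> 1 + 2 * m * ?Es + V * ?Es^2" using m_nonneg V0 Es0 by auto
      also have "\<dots> \<le> (1 + 2 * m * ?Es + V * ?Es^2) / (1 - m)"
        using assms m_nonneg calculation by (simp add: le_divide_eq)
      finally show ?thesis .
    qed
    finally show ?case .
  next
    case (Suc h)
    let ?S = "\<lambda>ts. sum_list (map (\<lambda>t. real (tsize t)) ts)"
    have "Q (Suc h) = (\<Sum>d<D. \<mu> d * (\<Sum>ts\<in>lst d (Tset D h).
        prod_list (map bw ts) + 2 * (prod_list (map bw ts) * ?S ts) + prod_list (map bw ts) * (?S ts)^2))"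
      unfolding Q_def mom_Suc real_tsize_Node by (simp add: algebra_simps power2_eq_square)
    also have "\<dots> = (\<Sum>d<D. \<mu> d * (a h ^ d + 2 * (\<Sum>ts\<in>lst d (Tset D h). prod_list (map bw ts) * ?S ts)
        + (\<Sum>ts\<in>lst d (Tset D h). prod_list (map bw ts) * (?S ts)^2)))"
      by (simp add: sum.distrib L0 finite_Tset a_def sum_distrib_left)
    also have "\<dots> \<le> (\<Sum>d<D. \<mu> d * (1 + 2 * (d * ?Es) + (d * Q h + real d * (real d - 1) * ?Es^2)))"
    proof (intro sum_mono mult_left_mono add_mono)
      fix d assume "d \<in> {..<D}"
      show "a h ^ d \<le> 1" using a_bounds[of h] by (intro power_le_one) auto
      have "(\<Sum>ts\<in>lst d (Tset D h). prod_list (map bw ts) * ?S ts) \<le> d * E h"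
        unfolding E_def using a_bounds[of h] unfolding a_def
        by (intro L1 finite_Tset) (auto simp: bw0)
      also have "\<dots> \<le> d * ?Es" using E_bound[OF assms] by (intro mult_left_mono) auto
      finally show "(\<Sum>ts\<in>lst d (Tset D h). prod_list (map bw ts) * ?S ts) \<le> d * ?Es" .
      have "(\<Sum>ts\<in>lst d (Tset D h). prod_list (map bw ts) * (?S ts)^2)
          \<le> d * Q h + real d * (real d - 1) * (E h)^2"
        unfolding E_def Q_def using a_bounds[of h] unfolding a_def
        by (intro L2 finite_Tset) (auto simp: bw0)
      also have "\<dots> \<le> d * Q h + real d * (real d - 1) * ?Es^2"
        using E_bound[OF assms] E_nonneg dd_nonneg
        by (intro add_mono mult_left_mono power_mono) auto
      finally show "(\<Sum>ts\<in>lst d (Tset D h). prod_list (map bw ts) * (?S ts)^2)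
          \<le> d * Q h + real d * (real d - 1) * ?Es^2" .
    qed (auto simp: nonneg)
    also have "\<dots> = (\<Sum>d<D. \<mu> d + (real d * \<mu> d) * (2 * ?Es) + (real d * \<mu> d) * Q h
         + (real d * (real d - 1) * \<mu> d) * ?Es^2)"
      by (intro sum.cong refl) (simp add: algebra_simps)
    also have "\<dots> = (\<Sum>d<D. \<mu> d) + m * (2 * ?Es) + m * Q h + V * ?Es^2"
      by (simp only: sum.distrib sum_distrib_right[symmetric] m_def V_def)
    also have "\<dots> \<le> (1 + 2 * m * ?Es + V * ?Es^2) + m * ?Qs"
      using mass mult_left_mono[OF Suc.IH m_nonneg] by (simp add: algebra_simps)
    also have "\<dots> = ?Qs" by (rule geo_aux[OF assms])
    finally show ?case .
  }
qed

definition "R h k = (\<Sum>t\<in>{t\<in>Tset D h. k \<le> theight t}. bw t)"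

lemma R_bound: "R h k \<le> m ^ k"
proof (induction h arbitrary: k)
  case 0
  show ?case
  proof (cases k)
    case 0
    then show ?thesis unfolding R_def using a_bounds[of 0] unfolding a_def by simp
  next
    case (Suc k')
    have E0: "{t\<in>Tset D 0. k \<le> theight t} = {}" using Suc by (auto simp: Tset_def)
    show ?thesis unfolding R_def E0 using m_nonneg by simp
  qed
next
  case (Suc h)
  show ?case
  proof (cases k)
    case 0
    then show ?thesis unfolding R_def using a_bounds[of "Suc h"] unfolding a_def by simp
  next
    case (Suc k')
    let ?\<phi> = "\<lambda>t::ptree. if k' \<le> theight t then 1 else (0::real)"
    have ind: "(if Suc k' \<le> theight (Node ts) then 1 else 0) \<le> sum_list (map ?\<phi> ts)" for ts
    proof (cases "Suc k' \<le> theight (Node ts)")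
      case True
      then have ne: "ts \<noteq> []" by (cases ts) auto
      then have km: "k' \<le> Max (theight ` set ts)" using True by simp
      have "Max (theight ` set ts) \<in> theight ` set ts" using ne by (intro Max_in) auto
      then obtain c where c: "c \<in> set ts" "k' \<le> theight c" using km by auto
      have "?\<phi> c \<le> sum_list (map ?\<phi> ts)" using c(1) by (intro member_le_sum_list) auto
      then show ?thesis using c True by simp
    qed (auto intro: sum_list_nonneg')
    have "R (Suc h) k = (\<Sum>t\<in>Tset D (Suc h). bw t * (if Suc k' \<le> theight t then 1 else 0))"
      unfolding R_def Suc by (simp add: sum.inter_filter[symmetric] finite_Tset if_distrib cong: if_cong)
    also have "\<dots> = (\<Sum>d<D. \<mu> d * (\<Sum>ts\<in>lst d (Tset D h). prod_list (map bw ts) *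
          (if Suc k' \<le> theight (Node ts) then 1 else 0)))"
      by (rule mom_Suc)
    also have "\<dots> \<le> (\<Sum>d<D. \<mu> d * (\<Sum>ts\<in>lst d (Tset D h). prod_list (map bw ts) * sum_list (map ?\<phi> ts)))"
      unfolding lst_def
      by (intro sum_mono mult_left_mono nonneg ind prod_list_nonneg bw0)
    also have "\<dots> \<le> (\<Sum>d<D. \<mu> d * (d * R h k'))"
    proof (intro sum_mono mult_left_mono nonneg)
      fix d
      have "(\<Sum>ts\<in>lst d (Tset D h). prod_list (map bw ts) * sum_list (map ?\<phi> ts))
          \<le> d * (\<Sum>t\<in>Tset D h. bw t * ?\<phi> t)"
        using a_bounds[of h] unfolding a_def by (intro L1 finite_Tset) (auto simp: bw0)
      also have "(\<Sum>t\<in>Tset D h. bw t * ?\<phi> t) = R h k'"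
        unfolding R_def by (simp add: sum.inter_filter[symmetric] finite_Tset if_distrib cong: if_cong)
      finally show "(\<Sum>ts\<in>lst d (Tset D h). prod_list (map bw ts) * sum_list (map ?\<phi> ts)) \<le> d * R h k'" .
    qed
    also have "\<dots> = (\<Sum>d<D. real d * \<mu> d * R h k')" by (simp add: mult_ac)
    also have "\<dots> = m * R h k'" by (simp add: m_def sum_distrib_right)
    also have "\<dots> \<le> m * m ^ k'" using Suc.IH m_nonneg by (intro mult_left_mono) auto
    finally show ?thesis using Suc by simp
  qed
qed

lemma e_bound:
  assumes "m < 1"
  shows "1 - a h \<le> \<tau> / (1 - m) + m ^ h"
proof (induction h)
  have t0: "0 \<le> \<tau>" using mass unfolding \<tau>_def by simp
  {
    case 0
    have "1 - a 0 \<le> 1" using a_bounds[of 0] by simp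
    also have "1 \<le> \<tau> / (1 - m) + m ^ 0" using t0 assms by simp
    finally show ?case .
  next
    case (Suc h)
    have "1 - a (Suc h) = \<tau> + (\<Sum>d<D. \<mu> d * (1 - a h ^ d))"
      unfolding a_Suc \<tau>_def by (simp add: sum_subtractf algebra_simps sum_distrib_left)
    also have "\<dots> \<le> \<tau> + (\<Sum>d<D. \<mu> d * (d * (1 - a h)))"
      using a_bounds[of h] by (intro add_mono sum_mono mult_left_mono one_minus_pow_le nonneg) auto
    also have "\<dots> = \<tau> + (\<Sum>d<D. real d * \<mu> d * (1 - a h))" by (simp add: mult_ac)
    also have "\<dots> = \<tau> + m * (1 - a h)" by (simp add: m_def sum_distrib_right)
    also have "\<dots> \<le> \<tau> + m * (\<tau> / (1 - m) + m ^ h)"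
      using Suc m_nonneg by (intro add_mono mult_left_mono) auto
    also have "\<dots> = \<tau> / (1 - m) + m ^ Suc h" using assms by (simp add: field_simps)
    finally show ?case .
  }
qed

end




lemma tsize_in_Tset: "tsize t \<le> B \<Longrightarrow> B \<le> D \<Longrightarrow> t \<in> Tset D B"
  using maxdeg_lt_tsize[of t] theight_lt_tsize[of t] by (auto simp: Tset_def)

lemma finite_size_le: "finite {t. tsize t \<le> B \<and> P t}"
proof -
  have "{t. tsize t \<le> B \<and> P t} \<subseteq> Tset B B" using tsize_in_Tset by auto
  then show ?thesis using finite_Tset finite_subset by blast
qed

lemma finite_size_eq: "finite {t. tsize t = n \<and> P t}"
  by (rule finite_subset[OF _ finite_size_le[of n "\<lambda>_. True"]]) auto

lemma finite_size_eq': "finite {t. tsize t = n}"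
  using finite_size_eq[of n "\<lambda>_. True"] by simp

lemma sum_by_size:
  "(\<Sum>n\<in>{L..B}. \<Sum>t\<in>{t. tsize t = n \<and> P n t}. g t)
     = (\<Sum>t\<in>{t. L \<le> tsize t \<and> tsize t \<le> B \<and> P (tsize t) t}. g t)"
proof -
  let ?S = "{t. L \<le> tsize t \<and> tsize t \<le> B \<and> P (tsize t) t}"
  have fS: "finite ?S" using finite_size_le[of B "\<lambda>t. L \<le> tsize t \<and> P (tsize t) t"]
    by (simp add: conj_ac cong: conj_cong)
  have "(\<Sum>t\<in>?S. g t) = (\<Sum>n\<in>{L..B}. \<Sum>t\<in>{x. x \<in> ?S \<and> tsize x = n}. g t)"
    by (rule sum.group[symmetric]) (use fS in auto)
  also have "\<dots> = (\<Sum>n\<in>{L..B}. \<Sum>t\<in>{t. tsize t = n \<and> P n t}. g t)"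
    by (intro sum.cong refl) auto
  finally show ?thesis by simp
qed

lemma sum_Un_le_real:
  assumes "finite A" "finite B" "\<And>x. 0 \<le> (g x :: real)"
  shows "sum g (A \<union> B) \<le> sum g A + sum g B"
proof -
  have "sum g (A \<union> B) = sum g A + sum g B - sum g (A \<inter> B)"
    using sum_Un[OF assms(1,2)] by simp
  moreover have "0 \<le> sum g (A \<inter> B)" using assms(3) by (intro sum_nonneg) auto
  ultimately show ?thesis by simp
qed

lemma pigeon:
  fixes Gd Rs :: "nat \<Rightarrow> real"
  assumes W: "finite W" and nn: "\<And>n. 0 \<le> Gd n" "\<And>n. 0 \<le> Rs n"
    and R: "(\<Sum>n\<in>W. Rs n) \<le> Rst" and G: "G \<le> (\<Sum>n\<in>W. Gd n)" "0 < G"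
  shows "\<exists>n\<in>W. 0 < Gd n \<and> G * Rs n \<le> Rst * Gd n"
proof (rule ccontr)
  assume H: "\<not> ?thesis"
  have "0 \<le> sum Rs W" using nn(2) by (intro sum_nonneg) auto
  then have Rst0: "0 \<le> Rst" using R by linarith
  obtain n0 where n0: "n0 \<in> W" "0 < Gd n0"
  proof (rule ccontr)
    assume "\<not> thesis"
    then have "\<forall>n\<in>W. Gd n \<le> 0" using that by force
    then have "(\<Sum>n\<in>W. Gd n) \<le> 0" by (intro sum_nonpos) auto
    then show False using G by linarith
  qed
  have le: "\<forall>n\<in>W. Rst * Gd n \<le> G * Rs n"
  proof
    fix n assume "n \<in> W"
    show "Rst * Gd n \<le> G * Rs n"
    proof (cases "0 < Gd n")
      case True then show ?thesis using H \<open>n \<in> W\<close> by force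
    next
      case False then have "Gd n = 0" using nn(1)[of n] by linarith
      then show ?thesis using G(2) nn(2)[of n] by simp
    qed
  qed
  have "(\<Sum>n\<in>W. Rst * Gd n) < (\<Sum>n\<in>W. G * Rs n)"
    using H n0 le by (intro sum_strict_mono_ex1[OF W]) force+
  then have "Rst * (\<Sum>n\<in>W. Gd n) < G * (\<Sum>n\<in>W. Rs n)"
    by (simp add: sum_distrib_left)
  moreover have "Rst * G \<le> Rst * (\<Sum>n\<in>W. Gd n)" using Rst0 G by (intro mult_left_mono) auto
  moreover have "G * (\<Sum>n\<in>W. Rs n) \<le> G * Rst" using G R by (intro mult_left_mono) auto
  ultimately show False by (simp add: mult.commute)
qed




lemma frac_mono_aux:
  fixes G Rst Gd Rs :: real
  assumes "0 < G" "0 \<le> Rst" "0 < Gd" "0 \<le> Rs" "G * Rs \<le> Rst * Gd"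
  shows "G / (G + Rst) \<le> Gd / (Gd + Rs)"
proof -
  have "G * (Gd + Rs) \<le> Gd * (G + Rst)" using assms by (simp add: algebra_simps)
  then show ?thesis using assms by (simp add: divide_simps mult.commute)
qed

lemma sum_list_real_tsize: "sum_list (map (\<lambda>t. real (tsize t)) ts) = real (sum_list (map tsize ts))"
  by (simp add: sum_list_of_nat[symmetric] o_def)

lemma length_le_sum_tsize: "length ts \<le> sum_list (map tsize ts)"
proof -
  have "sum_list (map (\<lambda>_. 1::nat) ts) \<le> sum_list (map tsize ts)"
    by (rule sum_list_mono) (use tsize_ge1 in auto)
  then show ?thesis by (simp add: sum_list_triv)
qed

lemma stage:
  fixes \<mu> f :: "nat \<Rightarrow> real" and K B D2 h :: nat and G Rst :: real
  assumes nonneg: "\<And>k. 0 \<le> \<mu> k"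
    and mass2: "(\<Sum>d<D2. \<mu> d) \<le> 1"
    and K1: "1 \<le> K" and KB: "K + 1 \<le> B" and BD: "B \<le> D2"
    and m1: "(\<Sum>d<K. real d * \<mu> d) < 1" and m2: "(\<Sum>d<D2. real d * \<mu> d) < 1"
    and wid: "\<And>n. K+1 \<le> n \<Longrightarrow> n \<le> B \<Longrightarrow> 0 < f n \<and> real n < real K * f n"
    and hgt: "\<And>n. K+1 \<le> n \<Longrightarrow> n \<le> B \<Longrightarrow> real h \<le> f n * ln (real n)"
    and Gpos: "0 < G"
    and Gdef: "G = \<mu> K * (1 - real K * ((1 - (\<Sum>d<K. \<mu> d)) / (1 - (\<Sum>d<K. real d * \<mu> d))
                    + (\<Sum>d<K. real d * \<mu> d) ^ B)
                  - real K * (1 / (1 - (\<Sum>d<K. real d * \<mu> d))) / real B)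
              - (\<Sum>d<D2. real d * \<mu> d) ^ h"
    and Rdef: "Rst = (1 + 2 * (\<Sum>d<K. real d * \<mu> d) * (1 / (1 - (\<Sum>d<K. real d * \<mu> d)))
                  + (\<Sum>d<K. real d * (real d - 1) * \<mu> d) * (1 / (1 - (\<Sum>d<K. real d * \<mu> d)))^2)
                  / (1 - (\<Sum>d<K. real d * \<mu> d)) / (real K + 1)^2
              + (\<Sum>d<D2. real d * \<mu> d) ^ h"
  shows "\<exists>n. K+1 \<le> n \<and> n \<le> B \<and> 0 < size_prob \<mu> n
     \<and> G / (G + Rst) \<le> cond_prob \<mu> n (\<lambda>t. real (theight t) < f n * ln (real n))
     \<and> G / (G + Rst) \<le> cond_prob \<mu> n (\<lambda>t. real (twidth t) > real n / f n)"
proof -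
  have mass1: "(\<Sum>d<K. \<mu> d) \<le> 1"
    using mass2 sum_mono2[of "{..<D2}" "{..<K}" \<mu>] KB BD nonneg by auto
  interpret M1: mom \<mu> K using nonneg mass1 K1 by unfold_locales auto
  interpret M2: mom \<mu> D2 using nonneg mass2 KB BD by unfold_locales auto
  have M1m: "M1.m = (\<Sum>d<K. real d * \<mu> d)" by (simp add: M1.m_def)
  have M2m: "M2.m = (\<Sum>d<D2. real d * \<mu> d)" by (simp add: M2.m_def)
  have M1V: "M1.V = (\<Sum>d<K. real d * (real d - 1) * \<mu> d)" by (simp add: M1.V_def)
  have M1t: "M1.\<tau> = 1 - (\<Sum>d<K. \<mu> d)" by (simp add: M1.\<tau>_def)
  let ?bw = "bw_weight \<mu>"
  have bw0: "0 \<le> ?bw t" for t by (rule M1.bw0)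
  define Good where "Good n t \<longleftrightarrow> K \<le> maxdeg t \<and> real (theight t) < f n * ln (real n)" for n t
  define Gd where "Gd n = (\<Sum>t\<in>{t. tsize t = n \<and> Good n t}. ?bw t)" for n
  define Rs where "Rs n = (\<Sum>t\<in>{t. tsize t = n \<and> \<not> Good n t}. ?bw t)" for n
  have Gd0: "0 \<le> Gd n" for n unfolding Gd_def by (intro sum_nonneg bw0)
  have Rs0: "0 \<le> Rs n" for n unfolding Rs_def by (intro sum_nonneg bw0)
  have sp: "size_prob \<mu> n = Gd n + Rs n" for n
  proof -
    have "{t. tsize t = n} = {t. tsize t = n \<and> Good n t} \<union> {t. tsize t = n \<and> \<not> Good n t}" by auto
    then show ?thesis unfolding size_prob_def Gd_def Rs_def
      by (simp add: sum.union_disjoint[symmetric] finite_size_eq disjoint_iff)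
  qed
  define U1 where "U1 = {t\<in>Tset K B. K+1 \<le> tsize t}"
  define U2 where "U2 = {t\<in>Tset D2 B. h \<le> theight t}"
  have fU1: "finite U1" unfolding U1_def using finite_Tset by auto
  have fU2: "finite U2" unfolding U2_def using finite_Tset by auto
  have U2b: "(\<Sum>t\<in>U2. ?bw t) \<le> M2.m ^ h"
    using M2.R_bound[of B h] unfolding M2.R_def U2_def .
  have U1b: "(\<Sum>t\<in>U1. ?bw t) \<le> M1.Q B / (real K + 1)^2"
  proof -
    have "(\<Sum>t\<in>U1. ?bw t) \<le> (\<Sum>t\<in>U1. ?bw t * (real (tsize t))^2 / (real K + 1)^2)"
    proof (intro sum_mono)
      fix t assume "t \<in> U1"
      then have "real K + 1 \<le> real (tsize t)" unfolding U1_def by auto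
      then have "(real K + 1)^2 \<le> (real (tsize t))^2" by (intro power_mono) auto
      then have X: "1 \<le> (real (tsize t))^2 / (real K + 1)^2" by (simp add: le_divide_eq)
      show "?bw t \<le> ?bw t * (real (tsize t))^2 / (real K + 1)^2"
        using mult_left_mono[OF X bw0[of t]] by (metis mult.right_neutral times_divide_eq_right)
    qed
    also have "\<dots> \<le> (\<Sum>t\<in>Tset K B. ?bw t * (real (tsize t))^2 / (real K + 1)^2)"
      by (intro sum_mono2 finite_Tset) (auto simp: U1_def bw0)
    also have "\<dots> = M1.Q B / (real K + 1)^2"
      unfolding M1.Q_def by (simp add: sum_divide_distrib)
    finally show ?thesis .
  qed
  have QB: "M1.Q B \<le> (1 + 2 * M1.m * (1/(1-M1.m)) + M1.V * (1/(1-M1.m))^2) / (1 - M1.m)"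
    using M1.Q_bound m1 M1m by simp
  have Rsum: "(\<Sum>n\<in>{K+1..B}. Rs n) \<le> Rst"
  proof -
    have "(\<Sum>n\<in>{K+1..B}. Rs n) = (\<Sum>t\<in>{t. K+1 \<le> tsize t \<and> tsize t \<le> B \<and> \<not> Good (tsize t) t}. ?bw t)"
      unfolding Rs_def by (rule sum_by_size)
    also have "\<dots> \<le> (\<Sum>t\<in>U1 \<union> U2. ?bw t)"
    proof (intro sum_mono2)
      show "finite (U1 \<union> U2)" using fU1 fU2 by auto
      show "{t. K+1 \<le> tsize t \<and> tsize t \<le> B \<and> \<not> Good (tsize t) t} \<subseteq> U1 \<union> U2"
      proof
        fix t assume t: "t \<in> {t. K+1 \<le> tsize t \<and> tsize t \<le> B \<and> \<not> Good (tsize t) t}"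
        show "t \<in> U1 \<union> U2"
        proof (cases "K \<le> maxdeg t")
          case False
          then have "t \<in> U1" using t theight_lt_tsize[of t] by (auto simp: U1_def Tset_def)
          then show ?thesis by auto
        next
          case True
          then have "f (tsize t) * ln (real (tsize t)) \<le> real (theight t)" using t by (auto simp: Good_def)
          moreover have "real h \<le> f (tsize t) * ln (real (tsize t))" using t hgt by auto
          ultimately have "h \<le> theight t" by linarith
          moreover have "t \<in> Tset D2 B" using t BD by (intro tsize_in_Tset) auto
          ultimately show ?thesis by (auto simp: U2_def)
        qed
      qed
    qed (auto simp: bw0)
    also have "\<dots> \<le> (\<Sum>t\<in>U1. ?bw t) + (\<Sum>t\<in>U2. ?bw t)" by (rule sum_Un_le_real[OF fU1 fU2 bw0])
    also have "\<dots> \<le> M1.Q B / (real K + 1)^2 + M2.m ^ h" using U1b U2b by linarith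
    also have "\<dots> \<le> Rst"
      unfolding Rdef M2m[symmetric] M1m[symmetric] M1V[symmetric]
      using QB by (intro add_mono divide_right_mono) auto
    finally show ?thesis .
  qed
  let ?C = "Tset K B"
  define Y where "Y = {ts\<in>lst K ?C. 1 + sum_list (map tsize ts) \<le> B}"
  define Z where "Z = lst K ?C - Y"
  have fL: "finite (lst K ?C)" by (intro finite_lst finite_Tset)
  have a01: "0 \<le> M1.a B" "M1.a B \<le> 1" using M1.a_bounds by auto
  have Ysum: "(\<Sum>ts\<in>Y. prod_list (map ?bw ts)) \<ge>
      1 - real K * (M1.\<tau> / (1 - M1.m) + M1.m ^ B) - real K * (1 / (1 - M1.m)) / real B"
  proof -
    have YZ: "(\<Sum>ts\<in>Y. prod_list (map ?bw ts)) = M1.a B ^ K - (\<Sum>ts\<in>Z. prod_list (map ?bw ts))"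
    proof -
      have "Y \<subseteq> lst K ?C" by (auto simp: Y_def)
      then have "(\<Sum>ts\<in>Z. prod_list (map ?bw ts)) = (\<Sum>ts\<in>lst K ?C. prod_list (map ?bw ts)) - (\<Sum>ts\<in>Y. prod_list (map ?bw ts))"
        unfolding Z_def by (intro sum_diff fL)
      then show ?thesis by (simp add: L0 finite_Tset M1.a_def)
    qed
    have "(\<Sum>ts\<in>Z. prod_list (map ?bw ts)) \<le> (\<Sum>ts\<in>Z. prod_list (map ?bw ts) * (sum_list (map (\<lambda>t. real (tsize t)) ts) / real B))"
    proof (intro sum_mono)
      fix ts assume "ts \<in> Z"
      then have "\<not> 1 + sum_list (map tsize ts) \<le> B" "set ts \<subseteq> ?C" by (auto simp: Z_def Y_def lst_def)
      then have X: "1 \<le> sum_list (map (\<lambda>t. real (tsize t)) ts) / real B"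
        using KB by (simp add: sum_list_real_tsize le_divide_eq)
      have P0: "0 \<le> prod_list (map ?bw ts)" by (intro prod_list_nonneg bw0)
      show "prod_list (map ?bw ts) \<le> prod_list (map ?bw ts) * (sum_list (map (\<lambda>t. real (tsize t)) ts) / real B)"
        using mult_left_mono[OF X P0] by simp
    qed
    also have "\<dots> \<le> (\<Sum>ts\<in>lst K ?C. prod_list (map ?bw ts) * (sum_list (map (\<lambda>t. real (tsize t)) ts) / real B))"
      by (intro sum_mono2 fL) (auto simp: Z_def lst_def intro!: mult_nonneg_nonneg prod_list_nonneg bw0 divide_nonneg_nonneg sum_list_nonneg')
    also have "\<dots> = (\<Sum>ts\<in>lst K ?C. prod_list (map ?bw ts) * sum_list (map (\<lambda>t. real (tsize t)) ts)) / real B"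
      by (simp add: sum_divide_distrib)
    also have "\<dots> \<le> (real K * M1.E B) / real B"
      unfolding M1.E_def using a01 unfolding M1.a_def
      by (intro divide_right_mono L1 finite_Tset) (auto simp: bw0)
    also have "\<dots> \<le> (real K * (1 / (1 - M1.m))) / real B"
      using M1.E_bound[of B] m1 M1m by (intro divide_right_mono mult_left_mono) auto
    finally have Zb: "(\<Sum>ts\<in>Z. prod_list (map ?bw ts)) \<le> real K * (1 / (1 - M1.m)) / real B" .
    have "1 - M1.a B ^ K \<le> real K * (1 - M1.a B)" using a01 by (rule one_minus_pow_le)
    also have "\<dots> \<le> real K * (M1.\<tau> / (1 - M1.m) + M1.m ^ B)"
      using M1.e_bound[of B] m1 M1m by (intro mult_left_mono) auto
    finally show ?thesis using YZ Zb by linarith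
  qed
  have Gs_sum: "(\<Sum>t\<in>Node ` Y. ?bw t) = \<mu> K * (\<Sum>ts\<in>Y. prod_list (map ?bw ts))"
  proof -
    have "(\<Sum>t\<in>Node ` Y. ?bw t) = (\<Sum>ts\<in>Y. ?bw (Node ts))"
      by (subst sum.reindex) (auto simp: inj_on_def)
    also have "\<dots> = (\<Sum>ts\<in>Y. \<mu> K * prod_list (map ?bw ts))"
      by (intro sum.cong refl) (auto simp: Y_def lst_def)
    finally show ?thesis by (simp add: sum_distrib_left)
  qed
  have Gsum: "G \<le> (\<Sum>n\<in>{K+1..B}. Gd n)"
  proof -
    let ?UG = "{t. K+1 \<le> tsize t \<and> tsize t \<le> B \<and> Good (tsize t) t}"
    have fUG: "finite ?UG" using finite_size_le[of B "\<lambda>t. K+1 \<le> tsize t \<and> Good (tsize t) t"]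
      by (simp add: conj_ac cong: conj_cong)
    have sub: "Node ` Y \<subseteq> ?UG \<union> U2"
    proof
      fix t assume "t \<in> Node ` Y"
      then obtain ts where ts: "t = Node ts" "ts \<in> Y" by auto
      have len: "length ts = K" using ts by (auto simp: Y_def lst_def)
      have sz: "tsize t \<le> B" using ts by (auto simp: Y_def)
      have "K + 1 \<le> tsize t" using ts len length_le_sum_tsize[of ts] by auto
      moreover have "K \<le> maxdeg t" using ts len by simp
      ultimately show "t \<in> ?UG \<union> U2"
      proof (cases "real (theight t) < f (tsize t) * ln (real (tsize t))")
        case True then show ?thesis using \<open>K + 1 \<le> tsize t\<close> \<open>K \<le> maxdeg t\<close> sz
          by (auto simp: Good_def)
      next
        case False
        then have "real h \<le> real (theight t)" using hgt[of "tsize t"] \<open>K + 1 \<le> tsize t\<close> sz by linarith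
        then have "h \<le> theight t" by simp
        moreover have "t \<in> Tset D2 B" using sz BD by (intro tsize_in_Tset) auto
        ultimately show ?thesis by (auto simp: U2_def)
      qed
    qed
    have "G \<le> \<mu> K * (\<Sum>ts\<in>Y. prod_list (map ?bw ts)) - M2.m ^ h"
      unfolding Gdef M2m[symmetric] M1m[symmetric] M1t[symmetric]
      using Ysum nonneg[of K] by (intro diff_mono mult_left_mono) auto
    also have "\<dots> \<le> (\<Sum>t\<in>Node ` Y. ?bw t) - (\<Sum>t\<in>U2. ?bw t)" using Gs_sum U2b by linarith
    also have "(\<Sum>t\<in>Node ` Y. ?bw t) \<le> (\<Sum>t\<in>?UG \<union> U2. ?bw t)"
      using sub fUG fU2 by (intro sum_mono2) (auto simp: bw0)
    also have "\<dots> \<le> (\<Sum>t\<in>?UG. ?bw t) + (\<Sum>t\<in>U2. ?bw t)" by (rule sum_Un_le_real[OF fUG fU2 bw0])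
    also have "(\<Sum>t\<in>?UG. ?bw t) = (\<Sum>n\<in>{K+1..B}. Gd n)"
      unfolding Gd_def by (rule sum_by_size[symmetric])
    finally show ?thesis by linarith
  qed
  obtain n where n: "n \<in> {K+1..B}" "0 < Gd n" "G * Rs n \<le> Rst * Gd n"
    using pigeon[OF _ Gd0 Rs0 Rsum Gsum Gpos] by auto
  have Rst0: "0 \<le> Rst"
    using Rsum sum_nonneg[of "{K+1..B}" Rs] Rs0 by (meson order_trans)
  have key: "G / (G + Rst) \<le> Gd n / size_prob \<mu> n"
    unfolding sp using frac_mono_aux[OF Gpos Rst0 n(2) Rs0 n(3)] .
  have spos: "0 < size_prob \<mu> n" unfolding sp using n(2) Rs0[of n] by linarith
  have c1: "Gd n / size_prob \<mu> n \<le> cond_prob \<mu> n P" if "\<And>t. tsize t = n \<Longrightarrow> Good n t \<Longrightarrow> P t" for P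
  proof -
    have "Gd n \<le> (\<Sum>t\<in>{t. tsize t = n \<and> P t}. ?bw t)"
      unfolding Gd_def using that by (intro sum_mono2 finite_size_eq) (auto simp: bw0)
    then show ?thesis unfolding cond_prob_def using spos by (intro divide_right_mono) auto
  qed
  have h1: "G / (G + Rst) \<le> cond_prob \<mu> n (\<lambda>t. real (theight t) < f n * ln (real n))"
    using key c1[of "\<lambda>t. real (theight t) < f n * ln (real n)"] by (auto simp: Good_def)
  have h2: "G / (G + Rst) \<le> cond_prob \<mu> n (\<lambda>t. real (twidth t) > real n / f n)"
  proof -
    have "real (twidth t) > real n / f n" if "tsize t = n" "Good n t" for t
    proof -
      have w: "0 < f n" "real n < real K * f n" using wid n(1) by auto
      have "real n / f n < real K" using w by (simp add: divide_less_eq)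
      also have "real K \<le> real (twidth t)" using that maxdeg_le_twidth[of t] by (auto simp: Good_def)
      finally show ?thesis .
    qed
    then show ?thesis using key c1 by (meson order_trans)
  qed
  show ?thesis using n(1) spos h1 h2 by auto
qed




lemma bern_up: "0 \<le> (y::real) \<Longrightarrow> y \<le> 1 \<Longrightarrow> (1 - y) ^ n \<le> 1 / (1 + n * y)"
proof -
  assume y: "0 \<le> y" "y \<le> 1"
  have "1 + n * y \<le> (1 + y) ^ n" using Bernoulli_inequality[of y n] y by simp
  moreover have "(1 - y) ^ n * (1 + y) ^ n \<le> 1"
  proof -
    have "(1 - y) ^ n * (1 + y) ^ n = (1 - y^2) ^ n" by (simp add: power_mult_distrib[symmetric] power2_eq_square algebra_simps)
    also have "\<dots> \<le> 1" using y by (intro power_le_one) (auto simp: power_le_one)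
    finally show ?thesis .
  qed
  moreover have "0 \<le> (1 - y) ^ n" using y by simp
  ultimately have "(1 - y) ^ n * (1 + n * y) \<le> 1"
    by (meson dual_order.trans mult_left_mono)
  moreover have "0 < 1 + n * y" using y by (simp add: add_pos_nonneg)
  ultimately show ?thesis by (simp add: le_divide_eq)
qed

lemma arith_stage:
  fixes x kk k' kn \<tau>1 V1 B G Rst m2h Jr :: real
  assumes x: "0 < x" "x \<le> 1/4"
    and Jr: "1 \<le> Jr"
    and hK: "32 * Jr * (k' + 2) \<le> x^4 * kk" and k'0: "0 \<le> k'"
    and kn: "4 * kk \<le> kn"
    and \<tau>: "0 \<le> \<tau>1" "\<tau>1 \<le> x / (2 * kk) + x / (2 * kn)"
    and V: "0 \<le> V1" "V1 \<le> k'"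
    and B: "B * x^3 = kk"
    and m2h: "0 \<le> m2h" "m2h \<le> 1 / kk^2"
    and mB: "0 \<le> mB" "mB \<le> 1 / (1 + B * x)"
    and Gdef: "G = x / (2 * kk) * (1 - kk * (\<tau>1 / (1 - (1 - x)) + mB) - kk * (1 / (1 - (1 - x))) / B) - m2h"
    and Rdef: "Rst = (1 + 2 * (1 - x) * (1 / (1 - (1 - x))) + V1 * (1 / (1 - (1 - x)))^2) / (1 - (1 - x)) / (kk + 1)^2 + m2h"
  shows "0 < G \<and> Jr * Rst \<le> G"
proof -
  have kkpos: "0 < kk"
  proof -
    have "0 < 32 * Jr * (k' + 2)" using Jr k'0 by auto
    then have "0 < x^4 * kk" using hK by linarith
    then show ?thesis using x by (simp add: zero_less_mult_iff)
  qed
  have knpos: "0 < kn" using kn kkpos by linarith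
  have Bpos: "0 < B" using B kkpos x by (metis zero_less_mult_pos2 zero_less_power)
  have x4: "x^4 \<le> x" using power_decreasing[of 1 4 x] x by simp
  have big: "16 \<le> x * kk"
  proof -
    have "1 * 2 \<le> Jr * (k' + 2)" using Jr k'0 by (intro mult_mono) auto
    then have "64 \<le> 32 * Jr * (k' + 2)" by simp
    also have "\<dots> \<le> x^4 * kk" by (rule hK)
    also have "\<dots> \<le> x * kk" using x4 kkpos by (intro mult_right_mono) auto
    finally show ?thesis by simp
  qed
  have s1: "kk * (\<tau>1 / x) \<le> 5/8"
  proof -
    have "kk * (\<tau>1 / x) \<le> kk * ((x / (2 * kk) + x / (2 * kn)) / x)"
      using \<tau> x kkpos by (intro mult_left_mono divide_right_mono) auto
    also have "\<dots> = 1/2 + kk / (2 * kn)" using x kkpos knpos by (simp add: field_simps)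
    also have "kk / (2 * kn) \<le> 1/8" using kn knpos kkpos by (simp add: divide_simps)
    finally show ?thesis by simp
  qed
  have s2: "kk * mB \<le> x^2"
  proof -
    have "kk * mB \<le> kk * (1 / (1 + B * x))" using mB kkpos by (intro mult_left_mono) auto
    also have "B * x = kk / x^2" using B x by (simp add: field_simps power3_eq_cube power2_eq_square)
    also have "kk * (1 / (1 + kk / x^2)) \<le> x^2"
      using x kkpos by (simp add: divide_simps power2_eq_square)
    finally show ?thesis .
  qed
  have s3: "kk * (1 / x) / B = x^2"
    using B x Bpos by (simp add: field_simps power3_eq_cube power2_eq_square)
  have "x^2 \<le> (1/4)^2" by (rule power_mono) (use x in auto)
  then have xx: "x^2 \<le> 1/16" by (simp add: power2_eq_square)
  have br: "1/4 \<le> 1 - kk * (\<tau>1 / x + mB) - kk * (1 / x) / B"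
  proof -
    have "kk * (\<tau>1 / x + mB) = kk * (\<tau>1 / x) + kk * mB" by (simp add: algebra_simps)
    then show ?thesis using s1 s2 s3 xx by linarith
  qed
  have g1: "x / (16 * kk) \<le> G"
  proof -
    have "x / (2 * kk) * (1/4) \<le> x / (2 * kk) * (1 - kk * (\<tau>1 / x + mB) - kk * (1 / x) / B)"
      using br x kkpos by (intro mult_left_mono) auto
    moreover have "m2h \<le> x / (16 * kk)"
    proof -
      have "1 / kk^2 \<le> x / (16 * kk)" using big kkpos by (simp add: divide_simps power2_eq_square)
      then show ?thesis using m2h by linarith
    qed
    ultimately show ?thesis unfolding Gdef by (simp add: field_simps)
  qed
  have "0 < x / (16 * kk)" using x kkpos by simp
  then have G0: "0 < G" using g1 by linarith
  have Q: "(1 + 2 * (1 - x) * (1 / x) + V1 * (1 / x)^2) / x \<le> (k' + 2) / x^3"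
  proof -
    have "1 + 2 * (1 - x) * (1 / x) + V1 * (1 / x)^2 \<le> 1 + 2 / x + k' / x^2"
      using x V by (intro add_mono) (auto simp: divide_simps)
    also have "\<dots> \<le> (k' + 2) / x^2"
    proof -
      have "x * x \<le> 1 * 1" using x by (intro mult_mono) auto
      then have "x^2 + 2 * x \<le> 2" using x by (simp add: power2_eq_square)
      then have "x^2 + 2*x + k' \<le> k' + 2" by simp
      then have "(x^2 + 2*x + k') / x^2 \<le> (k' + 2) / x^2" by (intro divide_right_mono) auto
      moreover have "1 + 2 / x + k' / x^2 = (x^2 + 2*x + k') / x^2" using x by (simp add: field_simps power2_eq_square)
      ultimately show ?thesis by simp
    qed
    finally have "(1 + 2 * (1 - x) * (1 / x) + V1 * (1 / x)^2) / x \<le> ((k' + 2) / x^2) / x"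
      using x by (intro divide_right_mono) auto
    also have "((k' + 2) / x^2) / x = (k' + 2) / x^3" by (simp add: power3_eq_cube power2_eq_square)
    finally show ?thesis .
  qed
  have R1: "Rst \<le> 2 * (k' + 2) / (x^3 * kk^2)"
  proof -
    have "Rst \<le> (k' + 2) / x^3 / (kk + 1)^2 + 1 / kk^2"
      unfolding Rdef using Q m2h by (intro add_mono divide_right_mono) auto
    also have "(k' + 2) / x^3 / (kk + 1)^2 \<le> (k' + 2) / x^3 / kk^2"
      using kkpos x k'0 by (intro divide_left_mono power_mono) auto
    also have "1 / kk^2 \<le> (k' + 2) / x^3 / kk^2"
    proof -
      have "x^3 \<le> 1" using x by (simp add: power_le_one)
      then have "1 \<le> (k' + 2) / x^3" using x k'0 by (simp add: le_divide_eq)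
      then show ?thesis using kkpos by (intro divide_right_mono) auto
    qed
    finally show ?thesis by (simp add: field_simps)
  qed
  have "Jr * Rst \<le> Jr * (2 * (k' + 2) / (x^3 * kk^2))" using R1 Jr by (intro mult_left_mono) auto
  also have "\<dots> \<le> x / (16 * kk)"
  proof -
    have eq: "Jr * (2 * (k' + 2)) * 16 = 32 * Jr * (k' + 2)" by (simp add: algebra_simps)
    have "Jr * (2 * (k' + 2)) * 16 \<le> x^4 * kk" by (subst eq) (rule hK)
    then show ?thesis using x kkpos
      by (simp add: divide_simps power2_eq_square power3_eq_cube) (simp add: algebra_simps power4_eq_xxxx)
  qed
  also have "\<dots> \<le> G" by (rule g1)
  finally show ?thesis using G0 by simp
qed




definition Nf :: "(nat \<Rightarrow> real) \<Rightarrow> real \<Rightarrow> nat" where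
  "Nf f c = (LEAST N. \<forall>n\<ge>N. c \<le> f n)"

lemma Nf: assumes "filterlim f at_top sequentially" "Nf f c \<le> n" shows "c \<le> f n"
proof -
  have "eventually (\<lambda>n. c \<le> f n) sequentially" using assms(1) by (simp add: filterlim_at_top)
  then have "\<exists>N. \<forall>n\<ge>N. c \<le> f n" by (simp add: eventually_sequentially)
  then have "\<forall>n\<ge>Nf f c. c \<le> f n" unfolding Nf_def by (rule LeastI_ex)
  then show ?thesis using assms(2) by auto
qed

fun ee :: "(nat \<Rightarrow> real) \<Rightarrow> nat \<Rightarrow> nat" where
  "ee f 0 = 1"
| "ee f (Suc j) = Nf f (16^(Suc j)) + 32 * Suc j * 16^(Suc j) * (3^(ee f j) + 2)"

definition KK :: "(nat \<Rightarrow> real) \<Rightarrow> nat \<Rightarrow> nat" where "KK f j = 3^(ee f j)"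

definition ww :: "nat \<Rightarrow> real" where "ww i = (1/2)^(Suc i)"

definition S0 :: "(nat \<Rightarrow> real) \<Rightarrow> real" where "S0 f = (\<Sum>i. ww i / real (KK f i))"

definition mu :: "(nat \<Rightarrow> real) \<Rightarrow> nat \<Rightarrow> real" where
  "mu f d = (if d = 0 then 1 - S0 f else if d \<in> range (KK f) then ww (inv (KK f) d) / real d else 0)"

lemma lt_3pow: "n < (3::nat)^n"
proof -
  have "n < 2^n" by (rule less_exp)
  also have "(2::nat)^n \<le> 3^n" by (intro power_mono) auto
  finally show ?thesis .
qed

lemma ee_Suc_ge: "32 * Suc j * 16^(Suc j) * (3^(ee f j) + 2) \<le> ee f (Suc j)"
  unfolding ee.simps by (rule le_add2)

lemma ee_Suc_Nf: "Nf f (16^(Suc j)) \<le> ee f (Suc j)"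
  unfolding ee.simps by (rule le_add1)

lemma ee_ge1: "1 \<le> ee f j"
proof (cases j)
  case (Suc j')
  have "0 < 32 * Suc j' * 16^(Suc j') * (3^(ee f j') + 2)" by simp
  then have "Suc 0 \<le> 32 * Suc j' * 16^(Suc j') * (3^(ee f j') + 2)" by (rule Suc_leI)
  then have "Suc 0 \<le> ee f (Suc j')" using ee_Suc_ge[of j' f] by (rule le_trans)
  then show ?thesis using Suc by simp
qed simp

lemma KK_ge3: "3 \<le> KK f j"
proof -
  have "3^1 \<le> (3::nat)^(ee f j)" using ee_ge1 by (intro power_increasing) auto
  then show ?thesis by (simp add: KK_def)
qed

lemma KK_ge_ee: "ee f j \<le> KK f j" unfolding KK_def using lt_3pow[of "ee f j"] by (rule less_imp_le)

lemma KK_Suc_big: "32 * Suc j * 16^(Suc j) * (KK f j + 2) \<le> KK f (Suc j)"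
  using ee_Suc_ge[of j f] KK_ge_ee[of f "Suc j"] unfolding KK_def by (rule le_trans)

lemma KK_Suc_Nf: "Nf f (16^(Suc j)) \<le> KK f (Suc j)"
  using ee_Suc_Nf[of f j] KK_ge_ee[of f "Suc j"] by (rule le_trans)

lemma KK_strict: "strict_mono (KK f)"
proof (rule strict_monoI_Suc)
  fix j
  have "1 * (KK f j + 2) \<le> 32 * Suc j * 16^(Suc j) * (KK f j + 2)"
    by (rule mult_le_mono1) simp
  then have "KK f j + 2 \<le> 32 * Suc j * 16^(Suc j) * (KK f j + 2)" by (simp only: mult_1)
  then show "KK f j < KK f (Suc j)" using KK_Suc_big[of j f] by linarith
qed

lemma KK_inj: "inj (KK f)" using KK_strict strict_mono_imp_inj_on by blast

lemma ww_pos: "0 < ww i" by (simp add: ww_def)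
lemma ww_nonneg: "0 \<le> ww i" by (simp add: ww_def)
lemma KK_pos: "0 < KK f j" using KK_ge3[of f j] by linarith
lemma KK_real_ge3: "3 \<le> real (KK f j)" using KK_ge3[of f j] by simp
lemma KK_m1: "0 \<le> real (KK f j) - 1" using KK_real_ge3[of f j] by linarith
lemma wK_nonneg: "0 \<le> ww i / real (KK f i)" using ww_nonneg KK_pos by simp

lemma ww_sums: "ww sums 1"
proof -
  have "(\<lambda>i. (1/2::real) * (1/2)^i) sums ((1/2) * (1 / (1 - 1/2)))"
    by (intro sums_mult geometric_sums) auto
  moreover have "ww = (\<lambda>i. (1/2::real) * (1/2)^i)" by (rule ext) (simp add: ww_def)
  ultimately show ?thesis by simp
qed

lemma summable_wK: "summable (\<lambda>i. ww i / real (KK f i))"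
proof (rule summable_comparison_test[OF _ sums_summable[OF ww_sums]])
  show "\<exists>N. \<forall>n\<ge>N. norm (ww n / real (KK f n)) \<le> ww n"
  proof (intro exI[of _ 0] allI impI)
    fix n
    have "ww n / real (KK f n) \<le> ww n / 1" using ww_nonneg KK_real_ge3[of f n]
      by (intro divide_left_mono) auto
    then show "norm (ww n / real (KK f n)) \<le> ww n" using wK_nonneg[of n f] by simp
  qed
qed

lemma S0_bounds: "0 \<le> S0 f \<and> S0 f \<le> 1"
proof -
  have "S0 f \<le> (\<Sum>i. ww i)" unfolding S0_def
  proof (intro suminf_le summable_wK sums_summable[OF ww_sums])
    fix n
    have "ww n / real (KK f n) \<le> ww n / 1" using ww_nonneg KK_real_ge3[of f n]
      by (intro divide_left_mono) auto
    then show "ww n / real (KK f n) \<le> ww n" by simp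
  qed
  moreover have "0 \<le> S0 f" unfolding S0_def using summable_wK wK_nonneg
    by (intro suminf_nonneg) auto
  ultimately show ?thesis using sums_unique[OF ww_sums] by simp
qed

lemma mu_KK: "mu f (KK f i) = ww i / real (KK f i)"
  using KK_ge3[of f i] by (auto simp: mu_def inv_f_f[OF KK_inj])

lemma KK_mu_mult: "real (KK f i) * mu f (KK f i) = ww i"
  using KK_pos[of f i] by (simp add: mu_KK)

lemma mu_0: "mu f 0 = 1 - S0 f" by (simp add: mu_def)

lemma mu_other: "d \<noteq> 0 \<Longrightarrow> d \<notin> range (KK f) \<Longrightarrow> mu f d = 0" by (simp add: mu_def)

lemma mu_nonneg: "0 \<le> mu f d"
  unfolding mu_def using S0_bounds[of f] ww_nonneg by auto

lemma sum_sparse: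
  assumes "\<And>d. d \<noteq> 0 \<Longrightarrow> d \<notin> range (KK f) \<Longrightarrow> F d = 0"
  shows "(\<Sum>d<KK f J. F d) = F 0 + (\<Sum>i<J. F (KK f i))"
proof -
  have sub: "insert 0 (KK f ` {..<J}) \<subseteq> {..<KK f J}"
    using KK_pos[of f J] strict_mono_less[OF KK_strict] by auto
  have z: "\<forall>d\<in>{..<KK f J} - insert 0 (KK f ` {..<J}). F d = 0"
  proof
    fix d assume d: "d \<in> {..<KK f J} - insert 0 (KK f ` {..<J})"
    show "F d = 0"
    proof (cases "d \<in> range (KK f)")
      case True
      then obtain i where i: "d = KK f i" by auto
      then have "i < J" using d strict_mono_less[OF KK_strict] by auto
      then show ?thesis using d i by auto
    next
      case False then show ?thesis using d assms by auto
    qed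
  qed
  have "(\<Sum>d<KK f J. F d) = (\<Sum>d\<in>insert 0 (KK f ` {..<J}). F d)"
    by (rule sum.mono_neutral_right) (use sub z in auto)
  also have "\<dots> = F 0 + (\<Sum>i<J. F (KK f i))"
  proof -
    have "0 \<notin> KK f ` {..<J}" using KK_pos[of f] by (metis image_iff less_irrefl)
    then have "(\<Sum>d\<in>insert 0 (KK f ` {..<J}). F d) = F 0 + (\<Sum>d\<in>KK f ` {..<J}. F d)" by simp
    also have "(\<Sum>d\<in>KK f ` {..<J}. F d) = (\<Sum>i<J. F (KK f i))"
      using KK_inj by (subst sum.reindex) (auto intro: inj_on_subset)
    finally show ?thesis .
  qed
  finally show ?thesis .
qed

lemma ww_partial: "(\<Sum>i<J. ww i) = 1 - (1/2)^J"
  by (induction J) (auto simp: ww_def)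

lemma mass_J: "(\<Sum>d<KK f J. mu f d) = 1 - S0 f + (\<Sum>i<J. ww i / real (KK f i))"
  by (subst sum_sparse) (auto simp: mu_other mu_0 mu_KK)

lemma mean_J: "(\<Sum>d<KK f J. real d * mu f d) = 1 - (1/2)^J"
proof -
  have "(\<Sum>d<KK f J. real d * mu f d) = (\<Sum>i<J. real (KK f i) * mu f (KK f i))"
    by (subst sum_sparse) (auto simp: mu_other)
  also have "\<dots> = (\<Sum>i<J. ww i)"
    by (intro sum.cong refl) (simp add: KK_mu_mult)
  finally show ?thesis by (simp add: ww_partial)
qed

lemma mass_J_le: "(\<Sum>d<KK f J. mu f d) \<le> 1"
proof -
  have "(\<Sum>i<J. ww i / real (KK f i)) \<le> S0 f"
    unfolding S0_def using summable_wK wK_nonneg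
    by (intro sum_le_suminf) auto
  then show ?thesis by (simp add: mass_J)
qed




lemma var_J:
  "0 \<le> (\<Sum>d<KK f (Suc j). real d * (real d - 1) * mu f d)
   \<and> (\<Sum>d<KK f (Suc j). real d * (real d - 1) * mu f d) \<le> real (KK f j)"
proof -
  have "(\<Sum>d<KK f (Suc j). real d * (real d - 1) * mu f d)
      = (\<Sum>i<Suc j. real (KK f i) * (real (KK f i) - 1) * mu f (KK f i))"
    by (subst sum_sparse) (auto simp: mu_other)
  also have "\<dots> = (\<Sum>i<Suc j. (real (KK f i) - 1) * ww i)"
  proof (intro sum.cong refl)
    fix i
    have "real (KK f i) * (real (KK f i) - 1) * mu f (KK f i) = (real (KK f i) - 1) * (real (KK f i) * mu f (KK f i))"
      by (simp only: mult_ac)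
    then show "real (KK f i) * (real (KK f i) - 1) * mu f (KK f i) = (real (KK f i) - 1) * ww i"
      by (simp only: KK_mu_mult)
  qed
  finally have eq: "(\<Sum>d<KK f (Suc j). real d * (real d - 1) * mu f d) = (\<Sum>i<Suc j. (real (KK f i) - 1) * ww i)" .
  have "(\<Sum>i<Suc j. (real (KK f i) - 1) * ww i) \<le> (\<Sum>i<Suc j. real (KK f j) * ww i)"
  proof (intro sum_mono mult_right_mono)
    fix i assume "i \<in> {..<Suc j}"
    then have "KK f i \<le> KK f j" using strict_mono_less_eq[OF KK_strict] by auto
    then show "real (KK f i) - 1 \<le> real (KK f j)" by linarith
  qed (use ww_nonneg in auto)
  also have "\<dots> = real (KK f j) * (1 - (1/2)^Suc j)" by (simp only: sum_distrib_left[symmetric] ww_partial)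
  also have "\<dots> \<le> real (KK f j)" by (simp add: mult_left_le)
  finally have up: "(\<Sum>i<Suc j. (real (KK f i) - 1) * ww i) \<le> real (KK f j)" .
  have "0 \<le> (\<Sum>i<Suc j. (real (KK f i) - 1) * ww i)"
    by (intro sum_nonneg mult_nonneg_nonneg KK_m1 ww_nonneg)
  then show ?thesis using eq up by simp
qed




lemma tau_bound:
  "1 - (\<Sum>d<KK f J. mu f d) \<le> ww J / real (KK f J) + ww J / real (KK f (Suc J))"
proof -
  let ?g = "\<lambda>i. ww i / real (KK f i)"
  have sg: "summable ?g" by (rule summable_wK)
  have sJ: "summable (\<lambda>n. ?g (n + J))" using sg by (rule summable_ignore_initial_segment)
  have "1 - (\<Sum>d<KK f J. mu f d) = S0 f - (\<Sum>i<J. ?g i)" by (simp add: mass_J)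
  also have "\<dots> = (\<Sum>n. ?g (n + J))" unfolding S0_def using suminf_split_initial_segment[OF sg, of J] by simp
  also have "\<dots> = ?g J + (\<Sum>n. ?g (Suc n + J))"
    using suminf_split_head[OF sJ] by simp
  also have "(\<Sum>n. ?g (Suc n + J)) \<le> (\<Sum>n. ww (Suc n + J) / real (KK f (Suc J)))"
  proof (intro suminf_le allI)
    fix n
    have "KK f (Suc J) \<le> KK f (Suc n + J)" using strict_mono_less_eq[OF KK_strict] by simp
    then show "?g (Suc n + J) \<le> ww (Suc n + J) / real (KK f (Suc J))"
      using KK_pos[of f "Suc J"] ww_nonneg by (intro divide_left_mono) auto
  next
    show "summable (\<lambda>n. ?g (Suc n + J))" using summable_Suc_iff[of "\<lambda>n. ?g (n + J)"] sJ by simp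
  next
    have "(\<lambda>n. ww (Suc n + J)) sums ((1/2)^(J+2) * (1 / (1 - 1/2)))"
    proof -
      have "(\<lambda>n. (1/2::real)^(J+2) * (1/2)^n) sums ((1/2)^(J+2) * (1 / (1 - 1/2)))"
        by (intro sums_mult geometric_sums) auto
      moreover have "(\<lambda>n. (1/2::real)^(J+2) * (1/2)^n) = (\<lambda>n. ww (Suc n + J))"
        by (rule ext) (simp add: ww_def power_add[symmetric] algebra_simps)
      ultimately show ?thesis by simp
    qed
    then show "summable (\<lambda>n. ww (Suc n + J) / real (KK f (Suc J)))"
      by (intro summable_divide sums_summable)
  qed
  also have "(\<Sum>n. ww (Suc n + J) / real (KK f (Suc J))) = ww J / real (KK f (Suc J))"
  proof -
    have "(\<lambda>n. (1/2::real)^(J+2) * (1/2)^n) sums ((1/2)^(J+2) * (1 / (1 - 1/2)))"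
      by (intro sums_mult geometric_sums) auto
    moreover have "(\<lambda>n. (1/2::real)^(J+2) * (1/2)^n) = (\<lambda>n. ww (Suc n + J))"
      by (rule ext) (simp add: ww_def power_add[symmetric] algebra_simps)
    moreover have "(1/2::real)^(J+2) * (1 / (1 - 1/2)) = ww J" by (simp add: ww_def)
    ultimately have "(\<lambda>n. ww (Suc n + J)) sums ww J" by simp
    then have "(\<lambda>n. ww (Suc n + J) / real (KK f (Suc J))) sums (ww J / real (KK f (Suc J)))"
      by (rule sums_divide)
    then show ?thesis by (rule sums_unique[symmetric])
  qed
  finally show ?thesis by simp
qed

lemma m2h_bound:
  "(1 - (1/2::real)^(Suc J)) ^ (8 * 2^J * e) \<le> 1 / (real (3^e))^2"
proof -
  let ?y = "(1/2::real)^(Suc J)"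
  have y: "0 \<le> ?y" "?y \<le> 1" by (simp, rule power_le_one) auto
  have "(1 - ?y) ^ (2^Suc J) \<le> 1 / (1 + real (2^Suc J) * ?y)" using bern_up[OF y] .
  also have "real (2^Suc J) * ?y = 1" by (simp add: power_mult_distrib[symmetric])
  finally have half: "(1 - ?y) ^ (2^Suc J) \<le> 1/2" by simp
  have "(1 - ?y) ^ (8 * 2^J * e) = ((1 - ?y) ^ (2^Suc J)) ^ (4 * e)"
    by (simp add: power_mult[symmetric] mult_ac)
  also have "\<dots> \<le> (1/2) ^ (4 * e)"
    using half y by (intro power_mono) auto
  also have "(1/2::real) ^ (4 * e) = 1 / 16^e" by (simp add: power_mult power_divide)
  also have "1 / 16^e \<le> 1 / (real (3^e))^2"
  proof -
    have "(real (3^e))^2 = (3::real)^(e*2)" by (simp add: power_mult)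
    also have "\<dots> = ((3::real)^2)^e" by (simp only: mult.commute[of e 2] power_mult)
    finally have "(real (3^e))^2 = 9^e" by simp
    moreover have "(9::real)^e \<le> 16^e" by (intro power_mono) auto
    ultimately show ?thesis by (simp add: frac_le)
  qed
  finally show ?thesis .
qed

lemma ln3: "1 \<le> ln (3::real)"
proof -
  have "ln (exp 1) \<le> ln (3::real)" using exp_le by (subst ln_le_cancel_iff) auto
  then show ?thesis by simp
qed




lemma ratio_aux:
  fixes G Rst Jr :: real
  assumes "0 < G" "0 \<le> Rst" "Jr * Rst \<le> G" "0 < Jr"
  shows "Jr / (Jr + 1) \<le> G / (G + Rst)"
proof -
  have "Jr * (G + Rst) \<le> G * (Jr + 1)" using assms by (simp add: algebra_simps)
  then show ?thesis using assms by (simp add: divide_simps mult.commute)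
qed

lemma stage_concrete:
  fixes f :: "nat \<Rightarrow> real"
  assumes lim: "filterlim f at_top sequentially" and j: "1 \<le> j"
  shows "\<exists>n. Suc j \<le> n \<and> 0 < size_prob (mu f) n
     \<and> real (Suc j) / (real (Suc j) + 1) \<le> cond_prob (mu f) n (\<lambda>t. real (theight t) < f n * ln (real n))
     \<and> real (Suc j) / (real (Suc j) + 1) \<le> cond_prob (mu f) n (\<lambda>t. real (twidth t) > real n / f n)"
proof -
  define J where "J = Suc j"
  define e where "e = ee f J"
  define K where "K = KK f J"
  define K' where "K' = KK f j"
  define D2 where "D2 = KK f (Suc J)"
  define B where "B = 8^J * K"
  define h where "h = 8 * 2^J * e"
  define x :: real where "x = (1/2)^J"
  define \<mu> where "\<mu> = mu f"
  define m1 where "m1 = (\<Sum>d<K. real d * \<mu> d)"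
  define m2 where "m2 = (\<Sum>d<D2. real d * \<mu> d)"
  define \<tau>1 where "\<tau>1 = 1 - (\<Sum>d<K. \<mu> d)"
  define V1 where "V1 = (\<Sum>d<K. real d * (real d - 1) * \<mu> d)"
  define G where "G = \<mu> K * (1 - real K * (\<tau>1 / (1 - m1) + m1 ^ B) - real K * (1 / (1 - m1)) / real B) - m2 ^ h"
  define Rst where "Rst = (1 + 2 * m1 * (1 / (1 - m1)) + V1 * (1 / (1 - m1))^2) / (1 - m1) / (real K + 1)^2 + m2 ^ h"
  have J2: "2 \<le> J" using j by (simp add: J_def)
  have Kge3: "3 \<le> K" unfolding K_def by (rule KK_ge3)
  have Kreal: "real K = 3 ^ e" unfolding K_def KK_def e_def by simp
  have m1x: "m1 = 1 - x" unfolding m1_def K_def \<mu>_def x_def by (rule mean_J)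
  have m2x: "m2 = 1 - (1/2)^(Suc J)" unfolding m2_def D2_def \<mu>_def by (rule mean_J)
  have \<mu>K: "\<mu> K = x / (2 * real K)" unfolding \<mu>_def K_def x_def
    by (simp add: mu_KK ww_def)
  have x: "0 < x" "x \<le> 1/4"
  proof -
    show "0 < x" by (simp add: x_def)
    have "(1/2::real)^J \<le> (1/2)^2" using J2 by (intro power_decreasing) auto
    then show "x \<le> 1/4" by (simp add: x_def power2_eq_square)
  qed
  have Jr: "1 \<le> real J" using J2 by simp
  have hKn: "32 * J * 16^J * (K' + 2) \<le> K" unfolding J_def K_def K'_def by (rule KK_Suc_big)
  have hK: "32 * real J * (real K' + 2) \<le> x^4 * real K"
  proof -
    have "real (32 * J * 16^J * (K' + 2)) \<le> real K" using hKn by (simp only: of_nat_le_iff)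
    then have "32 * real J * 16^J * (real K' + 2) \<le> real K" by (simp add: algebra_simps)
    then have "x^4 * (32 * real J * 16^J * (real K' + 2)) \<le> x^4 * real K" using x by (intro mult_left_mono) auto
    moreover have "x^4 * 16^J = 1"
    proof -
      have e1: "x^4 = ((1/2::real)^4)^J" unfolding x_def by (simp only: power_mult[symmetric] mult.commute)
      have e2: "((1/2::real)^4)^J * 16^J = ((1/2::real)^4 * 16)^J" by (rule power_mult_distrib[symmetric])
      have e3: "(1/2::real)^4 * 16 = 1" by (simp add: power4_eq_xxxx)
      show ?thesis by (simp only: e1 e2 e3 power_one)
    qed
    ultimately have L: "x^4 * (32 * real J * 16^J * (real K' + 2)) \<le> x^4 * real K"
      and E: "x^4 * 16^J = 1" by auto
    have "x^4 * (32 * real J * 16^J * (real K' + 2)) = 32 * real J * (real K' + 2) * (x^4 * 16^J)"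
      by (simp only: mult_ac)
    also have "\<dots> = 32 * real J * (real K' + 2)" by (simp only: E mult_1_right)
    finally have eq: "x^4 * (32 * real J * 16^J * (real K' + 2)) = 32 * real J * (real K' + 2)" .
    show ?thesis using L by (simp only: eq)
  qed
  have k'0: "0 \<le> real K'" by simp
  have Dn: "32 * Suc J * 16^(Suc J) * (K + 2) \<le> D2" unfolding D2_def K_def by (rule KK_Suc_big)
  have kn: "4 * real K \<le> real D2"
  proof -
    have "4 * K \<le> 32 * Suc J * 16^(Suc J) * (K + 2)"
    proof -
      have "4 * K \<le> 32 * (K + 2)" by simp
      also have "\<dots> \<le> 32 * (Suc J * 16^(Suc J)) * (K + 2)"
      proof (intro mult_le_mono order.refl)
        have p1: "1 \<le> (16::nat)^(Suc J)" by (rule one_le_power) simp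
        have "1 * 1 \<le> Suc J * 16^(Suc J)" by (rule mult_le_mono) (use p1 in auto)
        then show "32 \<le> 32 * (Suc J * 16^(Suc J))" by linarith
      qed
      finally show ?thesis by (simp only: mult.assoc)
    qed
    then have "4 * K \<le> D2" using Dn by linarith
    then show ?thesis by (simp only: of_nat_le_iff[symmetric] of_nat_mult)
  qed
  have \<tau>: "0 \<le> \<tau>1" "\<tau>1 \<le> x / (2 * real K) + x / (2 * real D2)"
  proof -
    show "0 \<le> \<tau>1" unfolding \<tau>1_def \<mu>_def K_def using mass_J_le by simp
    have "\<tau>1 \<le> ww J / real K + ww J / real D2"
      unfolding \<tau>1_def \<mu>_def K_def D2_def by (rule tau_bound)
    moreover have "ww J = x / 2" by (simp add: ww_def x_def)
    ultimately show "\<tau>1 \<le> x / (2 * real K) + x / (2 * real D2)" by simp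
  qed
  have V: "0 \<le> V1" "V1 \<le> real K'"
    using var_J[of f j] unfolding V1_def K_def K'_def \<mu>_def J_def by auto
  have Bx: "real B * x^3 = real K"
  proof -
    have "real B * x^3 = real K * (8^J * ((1/2)^J)^3)" by (simp add: B_def x_def mult_ac)
    also have "8^J * ((1/2::real)^J)^3 = 1"
    proof -
      have e1: "((1/2::real)^J)^3 = ((1/2::real)^3)^J" by (simp only: power_mult[symmetric] mult.commute)
      have e2: "8^J * ((1/2::real)^3)^J = (8 * (1/2::real)^3)^J" by (rule power_mult_distrib[symmetric])
      have e3: "8 * (1/2::real)^3 = 1" by (simp add: power3_eq_cube)
      show ?thesis by (simp only: e1 e2 e3 power_one)
    qed
    finally show ?thesis by simp
  qed
  have m2h: "0 \<le> m2 ^ h" "m2 ^ h \<le> 1 / (real K)^2"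
  proof -
    have "(1/2::real)^(Suc J) \<le> 1" by (rule power_le_one) auto
    then show "0 \<le> m2 ^ h" unfolding m2x by (intro zero_le_power) linarith
    show "m2 ^ h \<le> 1 / (real K)^2"
      unfolding m2x h_def Kreal using m2h_bound[of J e] by simp
  qed
  have mB: "0 \<le> (1 - x) ^ B" "(1 - x) ^ B \<le> 1 / (1 + real B * x)"
    using x bern_up[of x B] by auto
  have Gdef: "G = x / (2 * real K) * (1 - real K * (\<tau>1 / (1 - (1 - x)) + (1 - x) ^ B) - real K * (1 / (1 - (1 - x))) / real B) - m2 ^ h"
    unfolding G_def m1x \<mu>K ..
  have Rdef: "Rst = (1 + 2 * (1 - x) * (1 / (1 - (1 - x))) + V1 * (1 / (1 - (1 - x)))^2) / (1 - (1 - x)) / (real K + 1)^2 + m2 ^ h"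
    unfolding Rst_def m1x ..
  have AR: "0 < G \<and> real J * Rst \<le> G"
    by (rule arith_stage[OF x Jr hK k'0 kn \<tau> V Bx m2h mB Gdef Rdef])
  have Rst0: "0 \<le> Rst"
  proof -
    have N0: "0 \<le> 1 + 2 * (1 - x) * (1 / (1 - (1 - x))) + V1 * (1 / (1 - (1 - x)))^2"
      using x V by (intro add_nonneg_nonneg mult_nonneg_nonneg) auto
    have "0 \<le> (1 + 2 * (1 - x) * (1 / (1 - (1 - x))) + V1 * (1 / (1 - (1 - x)))^2) / (1 - (1 - x)) / (real K + 1)^2"
      using x by (intro divide_nonneg_nonneg N0) auto
    then show ?thesis unfolding Rdef using m2h by linarith
  qed
  have ratio: "real J / (real J + 1) \<le> G / (G + Rst)"
    using AR Rst0 Jr by (intro ratio_aux) auto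
  have fbig: "16^J \<le> f n" if "K \<le> n" for n
  proof -
    have "Nf f (16^J) \<le> K" unfolding K_def J_def by (rule KK_Suc_Nf)
    then show ?thesis using Nf[OF lim] that by auto
  qed
  have wid: "0 < f n \<and> real n < real K * f n" if "K+1 \<le> n" "n \<le> B" for n
  proof -
    have fn: "16^J \<le> f n" using fbig that by auto
    have "real n \<le> real B" using that(2) by simp
    also have "real B = 8^J * real K" by (simp add: B_def)
    also have "\<dots> < 16^J * real K" using Kge3 J2 by (intro mult_strict_right_mono power_strict_mono) auto
    also have "\<dots> \<le> f n * real K" using fn by (intro mult_right_mono) auto
    finally show ?thesis using fn by (auto simp: mult.commute intro: less_le_trans[of 0 "16^J"])
  qed
  have hgt: "real h \<le> f n * ln (real n)" if "K+1 \<le> n" "n \<le> B" for n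
  proof -
    have fn: "16^J \<le> f n" using fbig that by auto
    have lnK: "real e \<le> ln (real K)"
    proof -
      have "ln (real K) = real e * ln 3" unfolding Kreal by (simp add: ln_realpow)
      then show ?thesis using ln3 by (simp add: mult_le_cancel_left1)
    qed
    have "ln (real K) \<le> ln (real n)" using that Kge3 by (subst ln_le_cancel_iff) auto
    then have lnn: "real e \<le> ln (real n)" using lnK by linarith
    have "(8::real) * 2^J \<le> 16^J"
    proof -
      have "(8::real) * 2^J \<le> 8^J * 2^J" using J2 by (intro mult_right_mono) (auto simp: self_le_power)
      also have "\<dots> = 16^J" by (simp add: power_mult_distrib[symmetric])
      finally show ?thesis .
    qed
    then have "real h \<le> 16^J * real e" unfolding h_def by (simp add: mult_right_mono)
    also have "\<dots> \<le> f n * ln (real n)"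
    proof -
      have "(0::real) < 16^J" by simp
      then have "0 \<le> f n" using fn by linarith
      then show ?thesis using fn lnn by (intro mult_mono) auto
    qed
    finally show ?thesis .
  qed
  have K1: "1 \<le> K" using Kge3 by simp
  have KB: "K + 1 \<le> B"
  proof -
    have "K + 1 \<le> 8 * K" using K1 by simp
    also have "8 * K \<le> 8^J * K" using J2 by (intro mult_le_mono1) (simp add: self_le_power)
    finally show ?thesis by (simp add: B_def)
  qed
  have BD: "B \<le> D2"
  proof -
    have "8^J \<le> 32 * Suc J * 16^(Suc J)"
    proof -
      have "(8::nat)^J \<le> 16^J" by (rule power_mono) auto
      also have "\<dots> \<le> 16^(Suc J)" by (rule power_increasing) auto
      also have "\<dots> \<le> 32 * Suc J * 16^(Suc J)" by simp
      finally show ?thesis .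
    qed
    then have "8^J * K \<le> 32 * Suc J * 16^(Suc J) * (K + 2)" by (intro mult_le_mono) auto
    then show ?thesis using Dn by (simp add: B_def)
  qed
  have m1l: "(\<Sum>d<K. real d * \<mu> d) < 1" using m1x x unfolding m1_def by simp
  have m2l: "(\<Sum>d<D2. real d * \<mu> d) < 1" using m2x unfolding m2_def by simp
  have mass2: "(\<Sum>d<D2. \<mu> d) \<le> 1" unfolding \<mu>_def D2_def by (rule mass_J_le)
  have Gpos: "0 < G" using AR by simp
  obtain n where n: "K+1 \<le> n" "n \<le> B" "0 < size_prob \<mu> n"
     "G / (G + Rst) \<le> cond_prob \<mu> n (\<lambda>t. real (theight t) < f n * ln (real n))"
     "G / (G + Rst) \<le> cond_prob \<mu> n (\<lambda>t. real (twidth t) > real n / f n)"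
    using stage[OF _ mass2 K1 KB BD m1l m2l wid hgt Gpos G_def[unfolded m1_def m2_def \<tau>1_def]
        Rst_def[unfolded m1_def m2_def V1_def]] mu_nonneg unfolding \<mu>_def by blast
  have "Suc j \<le> n"
  proof -
    have "Suc j \<le> KK f (Suc j)" by (rule seq_suble[OF KK_strict])
    then show ?thesis using n(1) by (simp add: K_def J_def)
  qed
  then show ?thesis using n ratio unfolding \<mu>_def J_def by (meson order_trans)
qed




lemma mu_sums: "mu f sums 1"
proof -
  define g where "g d = (if d \<in> range (KK f) then ww (inv (KK f) d) / real d else 0)" for d
  have g0: "\<And>n. n \<notin> range (KK f) \<Longrightarrow> g n = 0" by (simp add: g_def)
  have gK: "g (KK f n) = ww n / real (KK f n)" for n by (simp add: g_def inv_f_f[OF KK_inj])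
  have "(\<lambda>n. g (KK f n)) sums S0 f"
    unfolding gK S0_def by (rule summable_sums[OF summable_wK])
  moreover have "(\<lambda>n. g (KK f n)) sums S0 f = g sums S0 f"
    using sums_mono_reindex[of "KK f" g "S0 f"] KK_strict g0 by blast
  ultimately have gs: "g sums S0 f" by simp
  have s1: "(\<lambda>d. if d = 0 then 1 - S0 f else 0) sums (1 - S0 f)"
    using sums_single[of 0 "\<lambda>_. 1 - S0 f"] by simp
  have "(\<lambda>d. (if d = 0 then 1 - S0 f else 0) + g d) sums (1 - S0 f + S0 f)"
    by (rule sums_add[OF s1 gs])
  moreover have "(\<lambda>d. (if d = 0 then 1 - S0 f else 0) + g d) = mu f"
  proof
    fix d
    show "(if d = 0 then 1 - S0 f else 0) + g d = mu f d"
    proof (cases "d = 0")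
      case True
      have "0 \<notin> range (KK f)" using KK_pos[of f] by (metis image_iff less_irrefl rangeE)
      then show ?thesis using True by (simp add: g_def mu_def)
    qed (simp add: g_def mu_def)
  qed
  ultimately show ?thesis by simp
qed

lemma mu_mean_sums: "(\<lambda>k. real k * mu f k) sums 1"
proof -
  define g where "g d = (if d \<in> range (KK f) then ww (inv (KK f) d) else 0)" for d
  have g0: "\<And>n. n \<notin> range (KK f) \<Longrightarrow> g n = 0" by (simp add: g_def)
  have gK: "g (KK f n) = ww n" for n by (simp add: g_def inv_f_f[OF KK_inj])
  have "(\<lambda>n. g (KK f n)) sums 1" unfolding gK by (rule ww_sums)
  moreover have "(\<lambda>n. g (KK f n)) sums 1 = g sums 1"
    using sums_mono_reindex[of "KK f" g 1] KK_strict g0 by blast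
  ultimately have gs: "g sums 1" by simp
  moreover have "g = (\<lambda>k. real k * mu f k)"
  proof
    fix k
    show "g k = real k * mu f k"
    proof (cases "k \<in> range (KK f)")
      case True
      then obtain i where i: "k = KK f i" by auto
      then show ?thesis using KK_mu_mult[of f i] by (simp add: gK)
    next
      case False
      then show ?thesis by (cases "k = 0") (auto simp: g_def mu_other)
    qed
  qed
  ultimately show ?thesis by simp
qed

lemma mu_critical: "critical (mu f)"
  unfolding critical_def offspring_distr_def using mu_nonneg mu_sums mu_mean_sums by auto

lemma cond_prob_le1:
  assumes "\<And>k. 0 \<le> \<mu> k"
  shows "cond_prob \<mu> n P \<le> 1"
proof -
  have num: "(\<Sum>t\<in>{t. tsize t = n \<and> P t}. bw_weight \<mu> t) \<le> size_prob \<mu> n"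
    unfolding size_prob_def
    by (intro sum_mono2 finite_size_eq') (auto intro: bw_nonneg assms)
  have n0: "0 \<le> (\<Sum>t\<in>{t. tsize t = n \<and> P t}. bw_weight \<mu> t)"
    by (intro sum_nonneg) (auto intro: bw_nonneg assms)
  show ?thesis
  proof (cases "size_prob \<mu> n = 0")
    case True then show ?thesis by (simp add: cond_prob_def)
  next
    case False
    then have "0 < size_prob \<mu> n" using num n0 by linarith
    then show ?thesis unfolding cond_prob_def using num by (simp add: divide_le_eq)
  qed
qed

lemma limsup_one:
  fixes g :: "nat \<Rightarrow> real"
  assumes le1: "\<And>n. g n \<le> 1"
    and big: "\<And>j. 1 \<le> j \<Longrightarrow> \<exists>n. Suc j \<le> n \<and> n \<in> S \<and> real (Suc j) / (real (Suc j) + 1) \<le> g n"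
  shows "Limsup (inf sequentially (principal S)) (\<lambda>n. ereal (g n)) = 1"
proof (rule antisym)
  show "Limsup (inf sequentially (principal S)) (\<lambda>n. ereal (g n)) \<le> 1"
    by (intro Limsup_bounded always_eventually) (simp add: le1)
  show "1 \<le> Limsup (inf sequentially (principal S)) (\<lambda>n. ereal (g n))"
    unfolding Limsup_def
  proof (rule INF_greatest)
    fix P assume "P \<in> {P. eventually P (inf sequentially (principal S))}"
    then have "eventually (\<lambda>x. x \<in> S \<longrightarrow> P x) sequentially"
      by (simp add: eventually_inf_principal)
    then obtain N where N: "\<And>n. N \<le> n \<Longrightarrow> n \<in> S \<Longrightarrow> P n"
      by (auto simp: eventually_sequentially)
    show "1 \<le> (SUP x\<in>{x. P x}. ereal (g x))"
    proof (rule dense_le)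
      fix y :: ereal assume y: "y < 1"
      show "y \<le> (SUP x\<in>{x. P x}. ereal (g x))"
      proof (cases y)
        case (real r)
        then have r: "r < 1" using y by simp
        obtain m :: nat where m: "1 / (1 - r) < real m" using reals_Archimedean2 by blast
        define j where "j = max 1 (max m N)"
        obtain n where n: "Suc j \<le> n" "n \<in> S" "real (Suc j) / (real (Suc j) + 1) \<le> g n"
          using big[of j] by (auto simp: j_def)
        have Pn: "P n" using N n by (simp add: j_def)
        have "r < real (Suc j) / (real (Suc j) + 1)"
        proof -
          have "1 / (1 - r) < real (Suc j)" using m by (simp add: j_def)
          then have "1 < real (Suc j) * (1 - r)" using r by (simp add: divide_less_eq)
          then have "r * real (Suc j) < real (Suc j) - 1" by (simp add: algebra_simps)
          then have "r * (real (Suc j) + 1) < real (Suc j)" using r by (simp add: algebra_simps)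
          moreover have "0 < real (Suc j) + 1" by simp
          ultimately show ?thesis by (simp add: pos_less_divide_eq)
        qed
        then have "y \<le> ereal (g n)" using n(3) real by simp
        also have "\<dots> \<le> (SUP x\<in>{x. P x}. ereal (g x))" using Pn by (intro SUP_upper) auto
        finally show ?thesis .
      qed (use y in auto)
    qed
  qed
qed



theorem theorem2:
  fixes f :: "nat \<Rightarrow> real"
  assumes "\<forall>n\<ge>1. f n > 0"
    and "filterlim f at_top sequentially"
  shows "\<exists>\<mu>. critical \<mu> \<and>
    Limsup (admissible_seq \<mu>)
      (\<lambda>n. ereal (cond_prob \<mu> n (\<lambda>t. real (theight t) < f n * ln (real n)))) = 1 \<and>
    Limsup (admissible_seq \<mu>)
      (\<lambda>n. ereal (cond_prob \<mu> n (\<lambda>t. real (twidth t) > real n / f n))) = 1"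
proof (intro exI conjI)
  let ?S = "{n. size_prob (mu f) n > 0}"
  show "critical (mu f)" by (rule mu_critical)
  have adm: "admissible_seq (mu f) = inf sequentially (principal ?S)" by (simp add: admissible_seq_def)
  show "Limsup (admissible_seq (mu f))
      (\<lambda>n. ereal (cond_prob (mu f) n (\<lambda>t. real (theight t) < f n * ln (real n)))) = 1"
    unfolding adm
  proof (rule limsup_one[of "\<lambda>n. cond_prob (mu f) n (\<lambda>t. real (theight t) < f n * ln (real n))"])
    show "\<And>n. cond_prob (mu f) n (\<lambda>t. real (theight t) < f n * ln (real n)) \<le> 1"
      by (rule cond_prob_le1[OF mu_nonneg])
    fix j :: nat assume "1 \<le> j"
    then show "\<exists>n. Suc j \<le> n \<and> n \<in> ?S \<and> real (Suc j) / (real (Suc j) + 1)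
        \<le> cond_prob (mu f) n (\<lambda>t. real (theight t) < f n * ln (real n))"
      using stage_concrete[OF assms(2)] by blast
  qed
  show "Limsup (admissible_seq (mu f))
      (\<lambda>n. ereal (cond_prob (mu f) n (\<lambda>t. real (twidth t) > real n / f n))) = 1"
    unfolding adm
  proof (rule limsup_one[of "\<lambda>n. cond_prob (mu f) n (\<lambda>t. real (twidth t) > real n / f n)"])
    show "\<And>n. cond_prob (mu f) n (\<lambda>t. real (twidth t) > real n / f n) \<le> 1"
      by (rule cond_prob_le1[OF mu_nonneg])
    fix j :: nat assume "1 \<le> j"
    then show "\<exists>n. Suc j \<le> n \<and> n \<in> ?S \<and> real (Suc j) / (real (Suc j) + 1)
        \<le> cond_prob (mu f) n (\<lambda>t. real (twidth t) > real n / f n)"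
      using stage_concrete[OF assms(2)] by blast
  qed
qed

end
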